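(* Let $0\le c<\sqrt2-1$, let $K\ge1$ be an integer, let $t$ be a positive integer such that $R=(1+c)t$ is an integer with $R\ge10$, and let $L=R^{2K+1}$. For $l\in[K]$ with $cR^{K-l}$ an integer, define $g_l=\big(1_{R^{K+1+l},R^{K-l}}\,2_{R^{K+1+l},R^{K-l}}\big)^{L/R^{K+1+l}}$. Let $w_1,w_2$ be words over $[K]$ using only letters $l$ with $cR^{K-l}$ an integer, let $\hat w$ denote the word obtained from $w$ by replacing each letter $l$ by $g_l$, and let $s=(w_1',w_2')$ be any common subsequence between $\hat w_1$ and $\hat w_2$. Then \[\operatorname{span} s\ \ge\ \left(3+c-\frac{28}{R}\right)\operatorname{len} s-16L\cdot\mathrm{LCS}(w_1,w_2)-\frac{40L}{R}.\]
   Context: Words $g_l$ are over $\{1,2\}$; $\alpha^m$ is letter $\alpha$ repeated $m$ times and $u^m$ is $m$ concatenated copies of $u$. For positive integers $M,a$ with $ca$, $M/((1+c)a)$ integers, $1_{M,a}=(1^a2^{ca})^{M/((1+c)a)}$ and $2_{M,a}=(2^a1^{ca})^{M/((1+c)a)}$. Symbols are distinguishable positions. A common subsequence of $u_1,u_2$ is a pair $(u_1',u_2')$ of subsequences of $u_1,u_2$ equal as words, of length $\operatorname{len}$; $\mathrm{LCS}(u_1,u_2)$ is the maximal length of a common subsequence. The span of a subsequence $u'$ in $u$ is the length of the shortest block of consecutive symbols of $u$ containing it, and $\operatorname{span}(w_1',w_2')=\operatorname{span}_{\hat w_1}w_1'+\operatorname{span}_{\hat w_2}w_2'$. *)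

theory Defs
  imports Complex_Main "HOL-Library.Sublist"
begin

text \<open>1_{M,a} = (1^a 2^{ca})^{M/((1+c)a)} and 2_{M,a} = (2^a 1^{ca})^{M/((1+c)a)};
  ca is assumed to be an integer (used via nat floor), and M/((1+c)a) integer.\<close>
definition one_blk :: "real \<Rightarrow> nat \<Rightarrow> nat \<Rightarrow> nat list" where
  "one_blk c M a = concat (replicate (nat \<lfloor>real M / ((1 + c) * real a)\<rfloor>)
                      (replicate a 1 @ replicate (nat \<lfloor>c * real a\<rfloor>) 2))"

definition two_blk :: "real \<Rightarrow> nat \<Rightarrow> nat \<Rightarrow> nat list" where
  "two_blk c M a = concat (replicate (nat \<lfloor>real M / ((1 + c) * real a)\<rfloor>)
                      (replicate a 2 @ replicate (nat \<lfloor>c * real a\<rfloor>) 1))"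

definition gword :: "real \<Rightarrow> nat \<Rightarrow> nat \<Rightarrow> nat \<Rightarrow> nat list" where
  "gword c R K l = concat (replicate (R ^ (2*K+1) div R ^ (K+1+l))
       (one_blk c (R ^ (K+1+l)) (R ^ (K-l)) @ two_blk c (R ^ (K+1+l)) (R ^ (K-l))))"

definition hat :: "real \<Rightarrow> nat \<Rightarrow> nat \<Rightarrow> nat list \<Rightarrow> nat list" where
  "hat c R K w = concat (map (gword c R K) w)"

text \<open>A common subsequence (with distinguishable symbols) is a pair of position sets
  selecting equal words.\<close>
definition common_subseq :: "'a list \<Rightarrow> 'a list \<Rightarrow> nat set \<Rightarrow> nat set \<Rightarrow> bool" where
  "common_subseq u1 u2 I1 I2 \<longleftrightarrow>
     I1 \<subseteq> {..<length u1} \<and> I2 \<subseteq> {..<length u2} \<and> nths u1 I1 = nths u2 I2"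

definition span_pos :: "nat set \<Rightarrow> nat" where
  "span_pos I = (if I = {} then 0 else Max I - Min I + 1)"

definition LCS :: "'a list \<Rightarrow> 'a list \<Rightarrow> nat" where
  "LCS u1 u2 = Max {length v | v. subseq v u1 \<and> subseq v u2}"

end

theory Submission
  imports Defs
begin

definition srt :: "(nat \<times> nat) list \<Rightarrow> bool" where
  "srt ps = sorted_wrt (\<lambda>x y. fst x < fst y \<and> snd x < snd y) ps"

definition hul :: "(nat \<times> nat \<Rightarrow> nat) \<Rightarrow> (nat \<times> nat) list \<Rightarrow> real" where
  "hul f xs = (if xs = [] then 0 else real (f (last xs)) - real (f (hd xs)) + 1)"

definition spn :: "(nat \<times> nat) list \<Rightarrow> real" where
  "spn xs = hul fst xs + hul snd xs"

lemma srt_append: "srt (xs @ ys) \<Longrightarrow> srt xs \<and> srt ys"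
  by (simp add: srt_def sorted_wrt_append)

lemma srt_cross: "srt (xs @ ys) \<Longrightarrow> x \<in> set xs \<Longrightarrow> y \<in> set ys \<Longrightarrow> fst x < fst y \<and> snd x < snd y"
  by (simp add: srt_def sorted_wrt_append)

lemma srt_hd_le: "srt xs \<Longrightarrow> x \<in> set xs \<Longrightarrow> fst (hd xs) \<le> fst x \<and> snd (hd xs) \<le> snd x"
  by (cases xs) (auto simp: srt_def)

lemma srt_last_ge: "srt xs \<Longrightarrow> x \<in> set xs \<Longrightarrow> fst x \<le> fst (last xs) \<and> snd x \<le> snd (last xs)"
proof (induction xs rule: rev_induct)
  case (snoc a xs) thus ?case by (auto simp: srt_def sorted_wrt_append)
qed simp

lemma hul_super:
  assumes "srt (xs @ ys)" "xs \<noteq> []" "ys \<noteq> []" "f = fst \<or> f = snd"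
  shows "hul f (xs @ ys) \<ge> hul f xs + hul f ys"
proof -
  have "fst (last xs) < fst (hd ys) \<and> snd (last xs) < snd (hd ys)"
    using srt_cross[OF assms(1)] assms(2,3) by simp
  then show ?thesis using assms by (auto simp: hul_def)
qed

lemma spn_super:
  assumes "srt (xs @ ys)" "xs \<noteq> []" "ys \<noteq> []"
  shows "spn (xs @ ys) \<ge> spn xs + spn ys"
  using hul_super[OF assms, of fst] hul_super[OF assms, of snd] by (simp add: spn_def)

lemma hul_ge_len:
  assumes "srt xs" "f = fst \<or> f = snd"
  shows "hul f xs \<ge> real (length xs)"
  using assms
proof (induction xs)
  case (Cons a xs)
  show ?case
  proof (cases "xs = []")
    case True thus ?thesis by (simp add: hul_def)
  next
    case False
    have s: "srt xs" using Cons.prems by (simp add: srt_def)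
    have "f a < f (hd xs)" using Cons.prems False by (cases xs) (auto simp: srt_def)
    then show ?thesis using Cons.IH[OF s Cons.prems(2)] False by (simp add: hul_def)
  qed
qed (simp add: hul_def)


lemma spn_ge_len: "srt xs \<Longrightarrow> spn xs \<ge> 2 * real (length xs)"
  using hul_ge_len[of xs fst] hul_ge_len[of xs snd] by (simp add: spn_def)

lemma chunk:
  fixes S :: "(nat \<times> nat) list \<Rightarrow> real" and w :: "nat \<times> nat \<Rightarrow> real"
    and key :: "nat \<times> nat \<Rightarrow> nat"
  assumes Qs: "\<And>xs ys. Q (xs @ ys) \<Longrightarrow> Q xs \<and> Q ys"
    and Ssup: "\<And>xs ys. Q (xs @ ys) \<Longrightarrow> xs \<noteq> [] \<Longrightarrow> ys \<noteq> [] \<Longrightarrow> S (xs @ ys) \<ge> S xs + S ys"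
    and loc: "\<And>cs. Q cs \<Longrightarrow> cs \<noteq> [] \<Longrightarrow> (\<forall>x\<in>set cs. key x = key (hd cs))
                 \<Longrightarrow> S cs \<ge> sum_list (map w cs) - \<beta>"
    and "Q ps" "ps \<noteq> []" "sorted (map key ps)" "\<beta> \<ge> 0"
  shows "S ps \<ge> sum_list (map w ps) - \<beta> * (real (key (last ps)) - real (key (hd ps)) + 1)"
  using assms(4-6)
proof (induction "length ps" arbitrary: ps rule: less_induct)
  case less
  define k where "k = key (hd ps)"
  define xs where "xs = takeWhile (\<lambda>x. key x = k) ps"
  define ys where "ys = dropWhile (\<lambda>x. key x = k) ps"
  have ps: "ps = xs @ ys" by (simp add: xs_def ys_def)
  have xsne: "xs \<noteq> []" using less.prems(2) by (cases ps) (auto simp: xs_def k_def)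
  have hdxs: "hd xs = hd ps" using xsne ps by (cases xs) auto
  have xk: "\<forall>x\<in>set xs. key x = key (hd xs)"
  proof
    fix x assume "x \<in> set xs"
    then have "key x = k" unfolding xs_def by (blast dest: set_takeWhileD)
    then show "key x = key (hd xs)" using hdxs k_def by simp
  qed
  have Qxs: "Q xs" and Qys: "Q ys" using Qs[of xs ys] less.prems(1) ps by auto
  have Sx: "S xs \<ge> sum_list (map w xs) - \<beta>" using loc[OF Qxs xsne xk] .
  show ?case
  proof (cases "ys = []")
    case True
    then have "ps = xs" using ps by simp
    moreover have "key (last ps) = key (hd ps)"
    proof -
      have "last xs \<in> set xs" using xsne by simp
      then have "key (last xs) = key (hd xs)" using xk by blast
      then show ?thesis using \<open>ps = xs\<close> by simp
    qed
    ultimately show ?thesis using Sx by simp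
  next
    case False
    have lastys: "last ps = last ys" using ps False by simp
    have "key (hd ys) \<noteq> k" using False hd_dropWhile[of "\<lambda>x. key x = k" ps] by (simp add: ys_def)
    moreover have "key (hd ys) \<ge> k"
    proof -
      have "sorted (map key xs @ map key ys)" using less.prems(3) ps by simp
      then have "key (hd xs) \<le> key (hd ys)" using xsne False
        by (simp add: sorted_append)
      then show ?thesis using hdxs k_def by simp
    qed
    ultimately have kk: "key (hd ys) \<ge> k + 1" by simp
    have lt: "length ys < length ps" using ps xsne by simp
    have IH: "S ys \<ge> sum_list (map w ys) - \<beta> * (real (key (last ys)) - real (key (hd ys)) + 1)"
    proof -
      have "sorted (map key ys)" using less.prems(3) ps by (simp add: sorted_append)
      then show ?thesis using less.hyps[OF lt Qys False] by simp
    qed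
    have "S ps \<ge> S xs + S ys" using Ssup[of xs ys] less.prems(1) ps xsne False by simp
    moreover have "\<beta> * (real (key (last ys)) - real (key (hd ys)) + 1) + \<beta>
        \<le> \<beta> * (real (key (last ps)) - real (key (hd ps)) + 1)"
    proof -
      have "real (key (hd ys)) \<ge> real (key (hd ps)) + 1" using kk k_def by simp
      then have "(real (key (last ys)) - real (key (hd ys)) + 1) + 1
          \<le> real (key (last ps)) - real (key (hd ps)) + 1" using lastys by simp
      then have "\<beta> * ((real (key (last ys)) - real (key (hd ys)) + 1) + 1)
          \<le> \<beta> * (real (key (last ps)) - real (key (hd ps)) + 1)"
        using assms(7) by (rule mult_left_mono)
      then show ?thesis by (simp add: distrib_left)
    qed
    ultimately show ?thesis using Sx IH ps by simp
  qed
qed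

definition gs :: "nat \<Rightarrow> nat \<Rightarrow> nat \<Rightarrow> nat \<Rightarrow> nat" where
  "gs a b M x = (if even (x div M) = (x mod (a + b) < a) then 1 else 2)"

lemma card_lt_Suc: "card {k. k < Suc y \<and> Pr k} = card {k. k < y \<and> Pr k} + (if Pr y then 1 else 0)"
proof -
  have "{k. k < Suc y \<and> Pr k} = (if Pr y then insert y {k. k < y \<and> Pr k} else {k. k < y \<and> Pr k})"
    by (auto simp: less_Suc_eq)
  then show ?thesis by simp
qed

lemma Cm_formula:
  assumes "0 < P" "a \<le> P"
  shows "card {k. k < y \<and> k mod P < a} = (y div P) * a + min (y mod P) a"
proof (induction y)
  case 0 then show ?case by simp
next
  case (Suc y)
  show ?case
  proof (cases "Suc (y mod P) = P")
    case True
    then have "Suc y div P = Suc (y div P)" "Suc y mod P = 0" by (simp_all add: div_Suc mod_Suc)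
    moreover have "min (y mod P) a + (if y mod P < a then 1 else 0) = a"
      using True assms by auto
    ultimately show ?thesis using Suc card_lt_Suc[of y "\<lambda>k. k mod P < a"] by simp
  next
    case False
    then have "Suc y div P = y div P" "Suc y mod P = Suc (y mod P)" by (simp_all add: div_Suc mod_Suc)
    moreover have "min (y mod P) a + (if y mod P < a then 1 else 0) = min (Suc (y mod P)) a"
      by auto
    ultimately show ?thesis using Suc card_lt_Suc[of y "\<lambda>k. k mod P < a"] by simp
  qed
qed

lemma E_bound:
  assumes "0 < a" "real b = c * real a" "0 \<le> c"
  shows "real y - (1 + c) * real (card {k. k < y \<and> k mod (a + b) < a}) \<ge> - real b"
    and "real y - (1 + c) * real (card {k. k < y \<and> k mod (a + b) < a}) \<le> 0"
proof -
  define P where "P = a + b"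
  define n where "n = y div P"
  define r where "r = y mod P"
  have P0: "0 < P" using assms P_def by simp
  have y: "real y = real n * (real a + real b) + real r"
    using div_mult_mod_eq[of y P] unfolding n_def r_def P_def
    by (metis of_nat_add of_nat_mult)
  have C: "card {k. k < y \<and> k mod (a + b) < a} = n * a + min r a"
    using Cm_formula[OF P0, of a y] P_def n_def r_def by simp
  have rP: "r < P" using P0 r_def by simp
  have key: "real y - (1 + c) * real (n * a + min r a) = real r - (1 + c) * real (min r a)"
    using y assms(2) by (simp add: algebra_simps)
  show "real y - (1 + c) * real (card {k. k < y \<and> k mod (a + b) < a}) \<ge> - real b"
  proof (cases "r \<le> a")
    case True
    then have "min r a = r" by simp
    moreover have "c * real r \<le> c * real a" using True assms(3) by (simp add: mult_left_mono)
    ultimately show ?thesis using C key assms(2) by (simp add: algebra_simps)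
  next
    case False
    then have "min r a = a" by simp
    then show ?thesis using C key assms(2) False by (simp add: algebra_simps)
  qed
  show "real y - (1 + c) * real (card {k. k < y \<and> k mod (a + b) < a}) \<le> 0"
  proof (cases "r \<le> a")
    case True
    then have "min r a = r" by simp
    moreover have "0 \<le> c * real r" using assms(3) by simp
    ultimately show ?thesis using C key by (simp add: algebra_simps)
  next
    case False
    then have "min r a = a" by simp
    moreover have "real r \<le> real a + real b" using rP P_def by simp
    ultimately show ?thesis using C key assms(2) by (simp add: algebra_simps)
  qed
qed

lemma card_interval_pred:
  assumes "x \<le> z"
  shows "card {k. x \<le> k \<and> k \<le> z \<and> Pr k} = card {k. k < Suc z \<and> Pr k} - card {k. k < x \<and> Pr k}"
proof -
  have "{k. x \<le> k \<and> k \<le> z \<and> Pr k} = {k. k < Suc z \<and> Pr k} - {k. k < x \<and> Pr k}" by auto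
  moreover have "{k. k < x \<and> Pr k} \<subseteq> {k. k < Suc z \<and> Pr k}" using assms by auto
  ultimately show ?thesis by (simp add: card_Diff_subset)
qed

lemma card_interval_pred_le:
  assumes "x \<le> z"
  shows "card {k. k < x \<and> Pr k} \<le> card {k. k < Suc z \<and> Pr k}"
  by (rule card_mono) (use assms in auto)

lemma card_interval_split:
  "card {k. x \<le> k \<and> k \<le> z \<and> Pr k} + card {k. x \<le> k \<and> k \<le> z \<and> \<not> Pr k} = Suc z - x"
proof -
  have "{k. x \<le> k \<and> k \<le> z \<and> Pr k} \<union> {k. x \<le> k \<and> k \<le> z \<and> \<not> Pr k} = {x..z}" by auto
  moreover have "card ({k. x \<le> k \<and> k \<le> z \<and> Pr k} \<union> {k. x \<le> k \<and> k \<le> z \<and> \<not> Pr k})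
     = card {k. x \<le> k \<and> k \<le> z \<and> Pr k} + card {k. x \<le> k \<and> k \<le> z \<and> \<not> Pr k}"
    by (rule card_Un_disjoint) auto
  ultimately show ?thesis by simp
qed

lemma dens:
  assumes "0 < a" "real b = c * real a" "0 \<le> c" "c * c + 2 * c \<le> 1" "x \<le> z"
    "Q \<subseteq> {x..z}" "\<forall>q\<in>Q. (q mod (a + b) < a) = \<tau>"
  shows "real (Suc z - x) \<ge> (if \<tau> then 1 + c else 3 + c) * real (card Q) - real a"
proof -
  define Pr where "Pr = (\<lambda>k. k mod (a + b) < a)"
  define N where "N = card {k. x \<le> k \<and> k \<le> z \<and> Pr k}"
  define F where "F = card {k. x \<le> k \<and> k \<le> z \<and> \<not> Pr k}"
  have NF: "N + F = Suc z - x" using card_interval_split[of x z Pr] N_def F_def by simp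
  have N: "real N = real (card {k. k < Suc z \<and> Pr k}) - real (card {k. k < x \<and> Pr k})"
    using card_interval_pred[OF assms(5), of Pr] card_interval_pred_le[OF assms(5), of Pr] N_def
    by simp
  have E1: "real (Suc z) - (1 + c) * real (card {k. k < Suc z \<and> Pr k}) \<ge> - real b"
   and E2: "real (Suc z) - (1 + c) * real (card {k. k < Suc z \<and> Pr k}) \<le> 0"
   and E3: "real x - (1 + c) * real (card {k. k < x \<and> Pr k}) \<ge> - real b"
   and E4: "real x - (1 + c) * real (card {k. k < x \<and> Pr k}) \<le> 0"
    using E_bound[OF assms(1-3), of "Suc z"] E_bound[OF assms(1-3), of x] unfolding Pr_def by blast+
  have len: "real (Suc z - x) = real (Suc z) - real x" using assms(5) by simp
  have NN: "(1 + c) * real N = (1 + c) * real (card {k. k < Suc z \<and> Pr k})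
      - (1 + c) * real (card {k. k < x \<and> Pr k})" unfolding N by (simp add: right_diff_distrib)
  have D1: "real (Suc z - x) - (1 + c) * real N \<ge> - real b"
    using E1 E4 NN len by linarith
  have D2: "real (Suc z - x) - (1 + c) * real N \<le> real b"
    using E2 E3 NN len by linarith
  have fin: "finite Q" using assms(6) finite_subset by blast
  have ba: "real b \<le> real a"
  proof -
    have "0 \<le> c * c" by simp
    then have "c \<le> 1" using assms(3,4) by linarith
    then have "c * real a \<le> 1 * real a" by (intro mult_right_mono) auto
    then show ?thesis using assms(2) by simp
  qed
  show ?thesis
  proof (cases \<tau>)
    case True
    have "Q \<subseteq> {k. x \<le> k \<and> k \<le> z \<and> Pr k}" using assms(6,7) True Pr_def by auto
    then have "card Q \<le> N" unfolding N_def by (intro card_mono) auto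
    then have "(1 + c) * real (card Q) \<le> (1 + c) * real N" using assms(3)
      by (intro mult_left_mono) auto
    then show ?thesis using True D1 ba by simp
  next
    case False
    have "Q \<subseteq> {k. x \<le> k \<and> k \<le> z \<and> \<not> Pr k}" using assms(6,7) False Pr_def by auto
    then have cQ: "card Q \<le> F" unfolding F_def by (intro card_mono) auto
    have NF': "real N = real (Suc z - x) - real F" using NF by simp
    have cl: "c * real (Suc z - x) \<ge> (1 + c) * real F - real b"
      using D2 NF' by (simp add: algebra_simps)
    show ?thesis
    proof (cases "c = 0")
      case True
      then have "real b = 0" using assms(2) by simp
      then have "F = 0" using cl True by simp
      then show ?thesis using cQ False by simp
    next
      case False
      then have cpos: "c > 0" using assms(3) by simp
      have "(3 + c) * real F * c \<le> (1 + c) * real F"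
      proof -
        have "(3 + c) * c \<le> 1 + c" using assms(4) by (simp add: algebra_simps)
        then have "((3 + c) * c) * real F \<le> (1 + c) * real F" by (intro mult_right_mono) auto
        then show ?thesis by (simp add: algebra_simps)
      qed
      then have "c * ((3 + c) * real F - real a) \<le> c * real (Suc z - x)"
        using cl assms(2) by (simp add: algebra_simps)
      then have "(3 + c) * real F - real a \<le> real (Suc z - x)" using cpos by simp
      moreover have "(3 + c) * real (card Q) \<le> (3 + c) * real F" using cQ assms(3) by simp
      ultimately show ?thesis using \<open>\<not> \<tau>\<close> by simp
    qed
  qed
qed

lemma gs_shift:
  assumes "(a + b) dvd M" "0 < M"
  shows "gs a b M (y + M) \<noteq> gs a b M y"
proof -
  have "(y + M) div M = Suc (y div M)" using assms(2) by simp
  moreover have "(y + M) mod (a + b) = y mod (a + b)" using assms(1)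
    by (auto elim!: dvdE)
  ultimately show ?thesis by (simp add: gs_def)
qed

lemma bal:
  assumes "(a + b) dvd M" "0 < M" "x \<le> z"
  shows "real (Suc z - x) \<ge> 2 * real (card {y. x \<le> y \<and> y \<le> z \<and> gs a b M y = \<sigma>}) - real M"
proof -
  define A where "A = {y. x \<le> y \<and> y \<le> z \<and> gs a b M y = \<sigma>}"
  define B where "B = {y. x \<le> y \<and> y \<le> z \<and> gs a b M y \<noteq> \<sigma>}"
  define A1 where "A1 = {y \<in> A. y + M \<le> z}"
  have AB: "card A + card B = Suc z - x" using card_interval_split[of x z "\<lambda>y. gs a b M y = \<sigma>"]
    A_def B_def by simp
  have "(\<lambda>y. y + M) ` A1 \<subseteq> B" using gs_shift[OF assms(1,2)] by (auto simp: A1_def A_def B_def)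
  moreover have "inj_on (\<lambda>y. y + M) A1" by (simp add: inj_on_def)
  moreover have "finite B" unfolding B_def by (rule finite_subset[of _ "{x..z}"]) auto
  ultimately have c1: "card A1 \<le> card B"
    using card_inj_on_le by blast
  have "A - A1 \<subseteq> {Suc z - M..z}" by (auto simp: A1_def A_def)
  then have "card (A - A1) \<le> card {Suc z - M..z}" by (intro card_mono) auto
  also have "\<dots> \<le> M" by simp
  finally have c2: "card (A - A1) \<le> M" .
  have finA: "finite A" unfolding A_def by (rule finite_subset[of _ "{x..z}"]) auto
  have "A1 \<subseteq> A" by (auto simp: A1_def)
  then have "card A = card A1 + card (A - A1)"
    using finA by (metis card_Diff_subset finite_subset card_mono le_add_diff_inverse)
  then have "card A \<le> card B + M" using c1 c2 by simp
  then show ?thesis using AB A_def by simp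
qed

lemma srt_distinct:
  assumes "srt cs"
  shows "distinct (map fst cs)" "distinct (map snd cs)"
proof -
  have "sorted_wrt (\<lambda>x y. fst x < fst y) cs"
    using assms unfolding srt_def by (rule sorted_wrt_mono_rel[rotated]) simp
  moreover have "sorted_wrt (\<lambda>x y. snd x < snd y) cs"
    using assms unfolding srt_def by (rule sorted_wrt_mono_rel[rotated]) simp
  ultimately have "sorted_wrt (<) (map fst cs)" "sorted_wrt (<) (map snd cs)"
    by (simp_all add: sorted_wrt_map)
  then show "distinct (map fst cs)" "distinct (map snd cs)"
    by (simp_all add: strict_sorted_iff)
qed

lemma srt_sorted_key:
  assumes "srt cs" "\<And>x y. x \<le> y \<Longrightarrow> f x \<le> f y"
  shows "sorted (map (\<lambda>x. f (fst x)) cs)" "sorted (map (\<lambda>x. f (snd x)) cs)"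
proof -
  have "sorted_wrt (\<lambda>x y. f (fst x) \<le> f (fst y)) cs"
    using assms(1) unfolding srt_def by (rule sorted_wrt_mono_rel[rotated]) (simp add: assms(2))
  moreover have "sorted_wrt (\<lambda>x y. f (snd x) \<le> f (snd y)) cs"
    using assms(1) unfolding srt_def by (rule sorted_wrt_mono_rel[rotated]) (simp add: assms(2))
  ultimately show "sorted (map (\<lambda>x. f (fst x)) cs)" "sorted (map (\<lambda>x. f (snd x)) cs)"
    by (simp_all add: sorted_wrt_map)
qed

lemma sum_if_list:
  "sum_list (map (\<lambda>x. if P x then A else B) xs) = A * real (length (filter P xs))
     + B * real (length (filter (\<lambda>x. \<not> P x) xs))"
  by (induction xs) (auto simp: algebra_simps)

lemma sum_list_const: "\<forall>x\<in>set xs. f x = (W::real) \<Longrightarrow> sum_list (map f xs) = W * real (length xs)"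
  by (induction xs) (auto simp: algebra_simps)

lemma hul_eq: "xs \<noteq> [] \<Longrightarrow> srt xs \<Longrightarrow> f = fst \<or> f = snd \<Longrightarrow>
   hul f xs = real (Suc (f (last xs)) - f (hd xs))"
proof -
  assume "xs \<noteq> []" "srt xs" "f = fst \<or> f = snd"
  then have "f (hd xs) \<le> f (last xs)" using srt_hd_le[of xs "last xs"] by auto
  then show ?thesis using \<open>xs \<noteq> []\<close> by (simp add: hul_def of_nat_diff)
qed

lemma hul_nonneg: "xs \<noteq> [] \<Longrightarrow> srt xs \<Longrightarrow> f = fst \<or> f = snd \<Longrightarrow> hul f xs \<ge> 0"
  using hul_eq by simp

lemma div_real_bounds:
  fixes p P :: nat assumes "0 < P"
  shows "real (p div P) * real P \<le> real p" "real p < (real (p div P) + 1) * real P"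
proof -
  have "real p = real (p div P * P + p mod P)" by (simp only: div_mult_mod_eq)
  then have e: "real p = real (p div P) * real P + real (p mod P)" by (simp only: of_nat_add of_nat_mult)
  have "real (p mod P) < real P" using assms by simp
  then show "real (p div P) * real P \<le> real p" "real p < (real (p div P) + 1) * real P"
    using e by (simp_all add: algebra_simps)
qed

lemma div_diff_bound:
  fixes p q P :: nat assumes "0 < P" "p \<le> q"
  shows "real (q div P) - real (p div P) \<le> (real q - real p) / real P + 1"
proof -
  have "real (q div P) * real P \<le> real q" "real p < (real (p div P) + 1) * real P"
    using div_real_bounds[OF assms(1)] by auto
  then have "(real (q div P) - real (p div P)) * real P \<le> real q - real p + real P"
    by (simp add: algebra_simps)
  then show ?thesis using assms(1) by (simp add: field_simps)
qed

locale twolev =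
  fixes a b M a' b' M' :: nat and c :: real and R :: nat
  assumes a'pos: "0 < a'"
    and bdef: "real b = c * real a" and b'def: "real b' = c * real a'"
    and c0: "0 \<le> c" and cc: "c * c + 2 * c \<le> 1"
    and PM: "(a + b) dvd M" and M0: "0 < M"
    and Ra: "R * a' \<le> a" and RM: "R * M \<le> M'" and Ra4: "4 * R * a' \<le> M'" and R0: "0 < R"
begin

definition rk :: "nat \<Rightarrow> nat" where
  "rk p = 2 * (p div (a + b)) + (if p mod (a + b) < a then 0 else 1)"

lemma apos: "0 < a"
proof -
  have "0 < R * a'" using a'pos R0 by simp
  then show ?thesis using Ra by linarith
qed

lemma P0: "0 < a + b" using apos by simp

lemma rk_mono: "p \<le> p' \<Longrightarrow> rk p \<le> rk p'"
proof -
  assume "p \<le> p'"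
  then have d: "p div (a + b) \<le> p' div (a + b)" by (rule div_le_mono)
  show ?thesis
  proof (cases "p div (a + b) = p' div (a + b)")
    case True
    have "p div (a + b) * (a + b) + p mod (a + b) \<le> p' div (a + b) * (a + b) + p' mod (a + b)"
      using \<open>p \<le> p'\<close> by (simp only: div_mult_mod_eq)
    then have "p mod (a + b) \<le> p' mod (a + b)" using True by simp
    then show ?thesis using True by (auto simp: rk_def)
  next
    case False
    then show ?thesis using d by (auto simp: rk_def)
  qed
qed

lemma rk_gs: "rk p = rk p' \<Longrightarrow> gs a b M p = gs a b M p'"
proof -
  assume h: "rk p = rk p'"
  have e1: "rk q div 2 = q div (a + b)" "rk q mod 2 = (if q mod (a + b) < a then 0 else 1)" for q
    by (auto simp: rk_def)
  have d: "p div (a + b) = p' div (a + b)" using e1(1)[of p] e1(1)[of p'] h by simp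
  have "(if p mod (a + b) < a then 0 else 1::nat) = (if p' mod (a + b) < a then 0 else 1)"
    using e1(2)[of p] e1(2)[of p'] h by simp
  then have m: "(p mod (a + b) < a) = (p' mod (a + b) < a)"
    by (cases "p mod (a + b) < a"; cases "p' mod (a + b) < a") auto
  obtain k where k: "M = (a + b) * k" using PM by (rule dvdE)
  have "p div M = p div (a + b) div k" "p' div M = p' div (a + b) div k"
    by (simp_all only: k div_mult2_eq)
  then have "even (p div M) = even (p' div M)" using d by simp
  then show ?thesis using m unfolding gs_def by presburger
qed

lemma rk_bounds: "2 * (p div (a + b)) \<le> rk p" "rk p \<le> 2 * (p div (a + b)) + 1"
  by (auto simp: rk_def)

lemma sub:
  assumes "srt cs" "cs \<noteq> []" "\<forall>x\<in>set cs. gs a b M (fst x) = gs a' b' M' (snd x)"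
    "\<forall>x\<in>set cs. snd x div M' = k0"
  shows "(1 + 2 / real R) * spn cs \<ge> (3 + c) * real (length cs) - real M - 4 * real a'"
proof -
  define mi where "mi = (\<lambda>q. q mod (a' + b') < a')"
  define w where "w = (\<lambda>x::nat\<times>nat. if mi (snd x) then 1 + c else 3 + c)"
  define Q where "Q = (\<lambda>cs. srt cs \<and> (\<forall>x\<in>set cs. gs a b M (fst x) = gs a' b' M' (snd x))
      \<and> (\<forall>x\<in>set cs. snd x div M' = k0))"
  have gsY: "\<And>q. q div M' = k0 \<Longrightarrow> gs a' b' M' q = (if even k0 = mi q then 1 else 2)"
    by (simp add: gs_def mi_def)
  have ch: "hul snd cs \<ge> sum_list (map w cs)
      - real a' * (real (rk (fst (last cs))) - real (rk (fst (hd cs))) + 1)"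
  proof (rule chunk[where Q = Q and S = "hul snd" and key = "\<lambda>x. rk (fst x)" and w = w and \<beta> = "real a'" and ps = cs])
    fix xs ys assume "Q (xs @ ys)"
    then show "Q xs \<and> Q ys" unfolding Q_def using srt_append[of xs ys] by simp
  next
    fix xs ys assume "Q (xs @ ys)" "xs \<noteq> []" "ys \<noteq> []"
    then show "hul snd (xs @ ys) \<ge> hul snd xs + hul snd ys"
      unfolding Q_def using hul_super[of xs ys snd] by simp
  next
    show "Q cs" using assms unfolding Q_def by simp
    show "cs \<noteq> []" by fact
    show "sorted (map (\<lambda>x. rk (fst x)) cs)" by (rule srt_sorted_key(1)[OF assms(1)]) (rule rk_mono)
    show "real a' \<ge> 0" by simp
  next
    fix ds assume Qd: "Q ds" and dne: "ds \<noteq> []" and kd: "\<forall>x\<in>set ds. rk (fst x) = rk (fst (hd ds))"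
    have sd: "srt ds" using Qd Q_def by simp
    define s where "s = gs a b M (fst (hd ds))"
    define \<tau> where "\<tau> = (if s = 1 then even k0 else \<not> even k0)"
    have mis: "\<forall>x\<in>set ds. mi (snd x) = \<tau>"
    proof
      fix x assume xd: "x \<in> set ds"
      have "rk (fst x) = rk (fst (hd ds))" using kd xd by blast
      then have "gs a b M (fst x) = s" unfolding s_def by (rule rk_gs)
      then have "gs a' b' M' (snd x) = s" using Qd xd Q_def by auto
      moreover have "snd x div M' = k0" using Qd xd Q_def by auto
      ultimately show "mi (snd x) = \<tau>" using gsY[of "snd x"] \<tau>_def by (auto split: if_splits)
    qed
    have ws: "sum_list (map w ds) = (if \<tau> then 1 + c else 3 + c) * real (length ds)"
    proof -
      have "\<forall>x\<in>set ds. w x = (if \<tau> then 1 + c else 3 + c)" using mis w_def by auto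
      then show ?thesis by (rule sum_list_const)
    qed
    define x0 where "x0 = snd (hd ds)"
    define z0 where "z0 = snd (last ds)"
    have xz: "x0 \<le> z0" using srt_hd_le[OF sd, of "last ds"] dne x0_def z0_def by simp
    have Qs: "snd ` set ds \<subseteq> {x0..z0}" using srt_hd_le[OF sd] srt_last_ge[OF sd] x0_def z0_def by auto
    have Qm: "\<forall>q\<in>snd ` set ds. (q mod (a' + b') < a') = \<tau>" using mis mi_def by auto
    have cardQ: "card (snd ` set ds) = length ds"
      using distinct_card[OF srt_distinct(2)[OF sd]] by simp
    have "real (Suc z0 - x0) \<ge> (if \<tau> then 1 + c else 3 + c) * real (card (snd ` set ds)) - real a'"
      by (rule dens[OF a'pos b'def c0 cc xz Qs Qm])
    moreover have "hul snd ds = real (Suc z0 - x0)" using hul_eq[OF dne sd] x0_def z0_def by simp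
    ultimately show "hul snd ds \<ge> sum_list (map w ds) - real a'" using ws cardQ by simp
  qed
  define pf where "pf = fst (hd cs)"
  define pl where "pl = fst (last cs)"
  have pfl: "pf \<le> pl" using srt_hd_le[OF assms(1), of "last cs"] assms(2) pf_def pl_def by simp
  have hf: "hul fst cs = real (Suc pl - pf)" using hul_eq[OF assms(2,1)] pf_def pl_def by simp
  have hf2: "hul fst cs = real pl - real pf + 1" using hf pfl by simp
  have rkb: "real (rk pl) - real (rk pf) + 1 \<le> 2 * ((real pl - real pf) / real (a + b)) + 4"
  proof -
    have "real (rk pl) \<le> 2 * real (pl div (a + b)) + 1" using rk_bounds(2)[of pl] by linarith
    moreover have "2 * real (pf div (a + b)) \<le> real (rk pf)" using rk_bounds(1)[of pf] by linarith
    moreover have "real (pl div (a + b)) - real (pf div (a + b)) \<le> (real pl - real pf) / real (a + b) + 1"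
      using div_diff_bound[OF P0 pfl] .
    ultimately show ?thesis by linarith
  qed
  have "R * a' \<le> a + b" using Ra by simp
  then have "real (R * a') \<le> real (a + b)" by (simp only: of_nat_le_iff)
  then have aR: "real a' * real R \<le> real (a + b)" by (simp add: mult.commute)
  have runs: "real a' * (real (rk pl) - real (rk pf) + 1) \<le> 2 * hul fst cs / real R + 4 * real a'"
  proof -
    have "real a' * (real (rk pl) - real (rk pf) + 1) \<le> real a' * (2 * ((real pl - real pf) / real (a + b)) + 4)"
      using rkb by (intro mult_left_mono) auto
    also have "\<dots> = 2 * (real pl - real pf) * (real a' / real (a + b)) + 4 * real a'"
      using P0 by (simp add: field_simps)
    also have "\<dots> \<le> 2 * (real pl - real pf) * (1 / real R) + 4 * real a'"
    proof -
      have pp: "real (a + b) * real R > 0" using P0 R0 by (intro mult_pos_pos) auto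
      have "real a' * real R / (real (a + b) * real R) \<le> real (a + b) / (real (a + b) * real R)"
        using aR pp by (intro divide_right_mono) auto
      then have "real a' / real (a + b) \<le> 1 / real R" using P0 R0 by simp
      moreover have "0 \<le> 2 * (real pl - real pf)" using pfl by simp
      ultimately have "2 * (real pl - real pf) * (real a' / real (a + b))
          \<le> 2 * (real pl - real pf) * (1 / real R)" by (rule mult_left_mono)
      then show ?thesis by linarith
    qed
    also have "\<dots> \<le> 2 * hul fst cs / real R + 4 * real a'"
    proof -
      have "2 * (real pl - real pf) / real R \<le> 2 * hul fst cs / real R"
        using hf2 R0 by (intro divide_right_mono) auto
      then show ?thesis by simp
    qed
    finally show ?thesis .
  qed
  define nT where "nT = length (filter (\<lambda>x. mi (snd x)) cs)"
  define nF where "nF = length (filter (\<lambda>x. \<not> mi (snd x)) cs)"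
  have nTF: "nT + nF = length cs" using sum_length_filter_compl[of "\<lambda>x. mi (snd x)" cs] unfolding nT_def nF_def by simp
  have wsum: "sum_list (map w cs) = (1 + c) * real nT + (3 + c) * real nF"
    unfolding w_def nT_def nF_def by (rule sum_if_list)
  define \<sigma> where "\<sigma> = (if even k0 then 1 else (2::nat))"
  have nTb: "nT \<le> card {y. pf \<le> y \<and> y \<le> pl \<and> gs a b M y = \<sigma>}"
  proof -
    let ?F = "filter (\<lambda>x. mi (snd x)) cs"
    have sub1: "fst ` set ?F \<subseteq> {y. pf \<le> y \<and> y \<le> pl \<and> gs a b M y = \<sigma>}"
    proof
      fix y assume "y \<in> fst ` set ?F"
      then obtain x where x: "x \<in> set cs" "mi (snd x)" "y = fst x" by auto
      have "gs a' b' M' (snd x) = \<sigma>" using gsY[of "snd x"] assms(4) x \<sigma>_def by auto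
      then have "gs a b M y = \<sigma>" using assms(3) x by auto
      moreover have "pf \<le> y" "y \<le> pl" using srt_hd_le[OF assms(1) x(1)] srt_last_ge[OF assms(1) x(1)]
        x(3) pf_def pl_def by auto
      ultimately show "y \<in> {y. pf \<le> y \<and> y \<le> pl \<and> gs a b M y = \<sigma>}" by simp
    qed
    have "distinct (map fst ?F)" using srt_distinct(1)[OF assms(1)] by (simp add: distinct_map_filter)
    then have "card (fst ` set ?F) = nT" unfolding nT_def using distinct_card by fastforce
    moreover have "finite {y. pf \<le> y \<and> y \<le> pl \<and> gs a b M y = \<sigma>}" by simp
    ultimately show ?thesis using card_mono[OF _ sub1] by simp
  qed
  have balc: "hul fst cs \<ge> 2 * real nT - real M"
  proof -
    have "real (Suc pl - pf) \<ge> 2 * real (card {y. pf \<le> y \<and> y \<le> pl \<and> gs a b M y = \<sigma>}) - real M"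
      by (rule bal[OF PM M0 pfl])
    then show ?thesis using nTb hf by linarith
  qed
  have hsn: "hul snd cs \<ge> 0" using hul_nonneg[OF assms(2,1)] by simp
  have hfn: "hul fst cs \<ge> 0" using hul_nonneg[OF assms(2,1)] by simp
  have main: "hul fst cs + hul snd cs + 2 * hul fst cs / real R \<ge> (3 + c) * real (length cs) - real M - 4 * real a'"
  proof -
    have "hul snd cs \<ge> (1 + c) * real nT + (3 + c) * real nF - 2 * hul fst cs / real R - 4 * real a'"
      using ch[folded pl_def pf_def] runs wsum by linarith
    moreover have "(3 + c) * real (length cs) = (3 + c) * real nT + (3 + c) * real nF"
    proof -
      have "real (length cs) = real nT + real nF" by (simp flip: nTF)
      then show ?thesis by (simp add: distrib_left)
    qed
    ultimately show ?thesis using balc by (simp add: algebra_simps)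
  qed
  have "(1 + 2 / real R) * spn cs = hul fst cs + hul snd cs + 2 * hul fst cs / real R + 2 * hul snd cs / real R"
    by (simp add: spn_def algebra_simps add_divide_distrib)
  moreover have "2 * hul snd cs / real R \<ge> 0" using hsn by simp
  ultimately show ?thesis using main by linarith
qed

end

context twolev begin

lemma M'pos: "0 < M'"
proof -
  have "0 < 4 * R * a'" using R0 a'pos by simp
  then show ?thesis using Ra4 by linarith
qed

lemma ratio: "(real M + 4 * real a') / real M' \<le> 2 / real R"
proof -
  have "R * (M + 4 * a') \<le> 2 * M'" using RM Ra4 by (simp add: algebra_simps)
  then have h: "real R * (real M + 4 * real a') \<le> 2 * real M'"
    by (metis of_nat_le_iff of_nat_mult of_nat_add of_nat_numeral)
  have pp: "real R * real M' > 0" using R0 M'pos by simp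
  have "real R * (real M + 4 * real a') / (real R * real M') \<le> 2 * real M' / (real R * real M')"
    using h pp by (intro divide_right_mono) auto
  then show ?thesis using R0 M'pos by simp
qed

lemma piece:
  assumes "srt cs" "cs \<noteq> []" "\<forall>x\<in>set cs. gs a b M (fst x) = gs a' b' M' (snd x)"
  shows "(1 + 4 / real R) * spn cs \<ge> (3 + c) * real (length cs) - (2 * real M + 8 * real a')"
proof -
  define Q where "Q = (\<lambda>cs. srt cs \<and> (\<forall>x\<in>set cs. gs a b M (fst x) = gs a' b' M' (snd x)))"
  have Rp: "0 \<le> 1 + 2 / real R" by simp
  have ch: "(1 + 2 / real R) * spn cs \<ge> sum_list (map (\<lambda>_. 3 + c) cs)
      - (real M + 4 * real a') * (real (snd (last cs) div M') - real (snd (hd cs) div M') + 1)"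
  proof (rule chunk[where Q = Q and S = "\<lambda>cs. (1 + 2 / real R) * spn cs" and key = "\<lambda>x. snd x div M'"
        and w = "\<lambda>_. 3 + c" and \<beta> = "real M + 4 * real a'" and ps = cs])
    fix xs ys assume "Q (xs @ ys)"
    then show "Q xs \<and> Q ys" unfolding Q_def using srt_append[of xs ys] by simp
  next
    fix xs ys assume h: "Q (xs @ ys)" "xs \<noteq> []" "ys \<noteq> []"
    then have "spn (xs @ ys) \<ge> spn xs + spn ys" unfolding Q_def using spn_super[of xs ys] by simp
    then have "(1 + 2 / real R) * (spn xs + spn ys) \<le> (1 + 2 / real R) * spn (xs @ ys)"
      using Rp by (rule mult_left_mono)
    then show "(1 + 2 / real R) * spn (xs @ ys) \<ge> (1 + 2 / real R) * spn xs + (1 + 2 / real R) * spn ys"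
      by (simp add: distrib_left)
  next
    show "Q cs" using assms unfolding Q_def by simp
    show "cs \<noteq> []" by fact
    show "sorted (map (\<lambda>x. snd x div M') cs)" by (rule srt_sorted_key(2)[OF assms(1)]) (rule div_le_mono)
    show "real M + 4 * real a' \<ge> 0" by simp
  next
    fix ds assume Qd: "Q ds" and dne: "ds \<noteq> []" and kd: "\<forall>x\<in>set ds. snd x div M' = snd (hd ds) div M'"
    have "(1 + 2 / real R) * spn ds \<ge> (3 + c) * real (length ds) - real M - 4 * real a'"
      by (rule sub[OF _ dne _ kd]) (use Qd Q_def in auto)
    moreover have "sum_list (map (\<lambda>_. 3 + c) ds) = (3 + c) * real (length ds)"
      by (rule sum_list_const) simp
    ultimately show "(1 + 2 / real R) * spn ds \<ge> sum_list (map (\<lambda>_. 3 + c) ds) - (real M + 4 * real a')"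
      by simp
  qed
  define qf where "qf = snd (hd cs)"
  define ql where "ql = snd (last cs)"
  have qfl: "qf \<le> ql" using srt_hd_le[OF assms(1), of "last cs"] assms(2) qf_def ql_def by simp
  have hs: "hul snd cs = real ql - real qf + 1" using hul_eq[OF assms(2,1), of snd] qfl qf_def ql_def by simp
  have kb: "real (ql div M') - real (qf div M') \<le> (real ql - real qf) / real M' + 1"
    by (rule div_diff_bound[OF M'pos qfl])
  define D where "D = real ql - real qf"
  have D0: "0 \<le> D" using qfl D_def by simp
  have "(real M + 4 * real a') * (real (ql div M') - real (qf div M') + 1)
      \<le> (real M + 4 * real a') * (D / real M' + 2)"
    using kb D_def by (intro mult_left_mono) auto
  also have "\<dots> = D * ((real M + 4 * real a') / real M') + 2 * (real M + 4 * real a')"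
    by (simp add: algebra_simps add_divide_distrib)
  also have "\<dots> \<le> D * (2 / real R) + 2 * (real M + 4 * real a')"
  proof -
    have "D * ((real M + 4 * real a') / real M') \<le> D * (2 / real R)"
      using ratio D0 by (rule mult_left_mono)
    then show ?thesis by linarith
  qed
  finally have e: "(real M + 4 * real a') * (real (ql div M') - real (qf div M') + 1)
      \<le> 2 * D / real R + 2 * real M + 8 * real a'" by (simp add: mult.commute)
  have "2 * D / real R \<le> 2 * spn cs / real R"
  proof -
    have "D \<le> spn cs" using hs D_def hul_nonneg[OF assms(2,1), of fst] by (simp add: spn_def)
    then show ?thesis using R0 by (intro divide_right_mono) auto
  qed
  moreover have "sum_list (map (\<lambda>_. 3 + c) cs) = (3 + c) * real (length cs)"
    by (rule sum_list_const) simp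
  moreover have "(1 + 4 / real R) * spn cs = (1 + 2 / real R) * spn cs + 2 * spn cs / real R"
    by (simp add: algebra_simps add_divide_distrib)
  ultimately show ?thesis using ch[folded qf_def ql_def] e by linarith
qed

end

lemma cr_nth: "i < n * length xs \<Longrightarrow> concat (replicate n xs) ! i = xs ! (i mod length xs)"
proof (induction n arbitrary: i)
  case 0 then show ?case by simp
next
  case (Suc n)
  show ?case
  proof (cases "i < length xs")
    case True then show ?thesis by (simp add: nth_append)
  next
    case False
    then have "i - length xs < n * length xs" using Suc.prems by simp
    then have "concat (replicate n xs) ! (i - length xs) = xs ! ((i - length xs) mod length xs)"
      by (rule Suc.IH)
    moreover have "(i - length xs) mod length xs = i mod length xs" using False
      by (simp add: mod_if)
    ultimately show ?thesis using False by (simp add: nth_append)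
  qed
qed

lemma len_cr: "length (concat (replicate n xs)) = n * length xs"
  by (induction n) auto

lemma concat_map_nth:
  assumes "\<forall>l\<in>set w. length (f l) = m" "x < m * length w"
  shows "concat (map f w) ! x = f (w ! (x div m)) ! (x mod m)"
  using assms
proof (induction w arbitrary: x)
  case Nil then show ?case by simp
next
  case (Cons l w)
  have lf: "length (f l) = m" using Cons.prems by simp
  show ?case
  proof (cases "x < m")
    case True then show ?thesis using lf by (simp add: nth_append)
  next
    case False
    have m0: "0 < m" using Cons.prems(2) by (cases m) auto
    have "x - m < m * length w" using Cons.prems False by simp
    then have IH: "concat (map f w) ! (x - m) = f (w ! ((x - m) div m)) ! ((x - m) mod m)"
      using Cons.IH Cons.prems by simp
    have e: "(x - m) div m = x div m - 1" "(x - m) mod m = x mod m" using False m0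
      by (simp_all add: div_if mod_if)
    have "x div m \<ge> 1" using False m0 by (simp add: div_if)
    then have e2: "w ! (x div m - 1) = (l # w) ! (x div m)" by (cases "x div m") auto
    show ?thesis using False lf IH e e2 by (simp add: nth_append)
  qed
qed

lemma len_concat_map:
  "\<forall>l\<in>set w. length (f l) = m \<Longrightarrow> length (concat (map f w)) = m * length w"
  by (induction w) auto

lemma even_div_iff: fixes y M :: nat shows "0 < M \<Longrightarrow> even (y div M) = (y mod (2 * M) < M)"
proof -
  assume M: "0 < M"
  have "y mod (M * 2) = M * (y div M mod 2) + y mod M" by (rule mod_mult2_eq)
  moreover have "y mod M < M" using M by simp
  ultimately show ?thesis by (auto simp: mult.commute elim!: oddE evenE simp: mod2_eq_if split: if_splits)
qed

lemma gs_mod: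
  assumes "(2 * M) dvd N" "(a + b) dvd N" "0 < M"
  shows "gs a b M (x mod N) = gs a b M x"
proof -
  obtain j where j: "N = (2 * M) * j" using assms(1) by (rule dvdE)
  have x: "x = N * (x div N) + x mod N" by simp
  have "x div M = 2 * (j * (x div N)) + (x mod N) div M"
  proof -
    have "x = M * (2 * (j * (x div N))) + x mod N" using x j by (simp add: algebra_simps)
    then have "x div M = (M * (2 * (j * (x div N))) + x mod N) div M" by simp
    also have "\<dots> = 2 * (j * (x div N)) + (x mod N) div M" using assms(3) by simp
    finally show ?thesis .
  qed
  then have "even (x div M) = even ((x mod N) div M)" by simp
  moreover have "(x mod N) mod (a + b) = x mod (a + b)" using assms(2) by (rule mod_mod_cancel)
  ultimately show ?thesis by (simp add: gs_def)
qed

lemma blk_nth: "j < a + b \<Longrightarrow> (replicate a u @ replicate b v) ! j = (if j < a then u else v)"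
  by (simp add: nth_append)

lemma two_blocks_nth:
  fixes a b M N :: nat
  assumes "N * (a + b) = M" "0 < a" "y < 2 * M"
  shows "(concat (replicate N (replicate a 1 @ replicate b 2)) @ concat (replicate N (replicate a 2 @ replicate b 1))) ! y
       = gs a b M y"
proof -
  have M0: "0 < M" using assms(3) by simp
  have dv: "(a + b) dvd M" using assms(1) by (metis dvd_triv_right)
  have l1: "length (concat (replicate N (replicate a (1::nat) @ replicate b 2))) = M"
    using assms(1) by (simp add: len_cr)
  show ?thesis
  proof (cases "y < M")
    case True
    have "concat (replicate N (replicate a (1::nat) @ replicate b 2)) ! y = (replicate a 1 @ replicate b 2) ! (y mod (a + b))"
      using True assms(1) by (subst cr_nth) (auto simp: mult.commute)
    also have "\<dots> = (if y mod (a + b) < a then 1 else 2)" using assms(2) by (intro blk_nth) simp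
    finally have "concat (replicate N (replicate a (1::nat) @ replicate b 2)) ! y = (if y mod (a + b) < a then 1 else 2)" .
    moreover have "even (y div M)" using True by simp
    ultimately show ?thesis using True l1 by (simp add: nth_append gs_def)
  next
    case False
    define z where "z = y - M"
    have z: "z < M" using False assms(3) z_def by simp
    have "concat (replicate N (replicate a (2::nat) @ replicate b 1)) ! z = (replicate a 2 @ replicate b 1) ! (z mod (a + b))"
      using z assms(1) by (subst cr_nth) (auto simp: mult.commute)
    also have "\<dots> = (if z mod (a + b) < a then 2 else 1)" using assms(2) by (intro blk_nth) simp
    finally have h: "concat (replicate N (replicate a (2::nat) @ replicate b 1)) ! z = (if z mod (a + b) < a then 2 else 1)" .
    have "y = z + M" using False z_def by simp
    then have "y mod (a + b) = z mod (a + b)" "y div M = Suc (z div M)" "z div M = 0"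
      using dv z by (auto elim!: dvdE)
    then have "gs a b M y = (if z mod (a + b) < a then 2 else 1)" by (simp add: gs_def)
    then show ?thesis using h False l1 z_def by (simp add: nth_append)
  qed
qed

locale conc =
  fixes c :: real and K t R :: nat
  assumes c0: "0 \<le> c" and csq: "c < sqrt 2 - 1" and K1: "K \<ge> 1" and t0: "t > 0"
    and Rdef: "real R = (1 + c) * real t" and R10: "R \<ge> 10"
begin

definition aL :: "nat \<Rightarrow> nat" where "aL l = R ^ (K - l)"
definition bL :: "nat \<Rightarrow> nat" where "bL l = nat \<lfloor>c * real (R ^ (K - l))\<rfloor>"
definition Mb :: "nat \<Rightarrow> nat" where "Mb l = R ^ (K + 1 + l)"
definition LL :: nat where "LL = R ^ (2 * K + 1)"
definition ok :: "nat \<Rightarrow> bool" where "ok l \<longleftrightarrow> l \<in> {1..K} \<and> c * real (R ^ (K - l)) \<in> \<int>"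

lemma powE: "(m::nat) = n \<Longrightarrow> (x::nat) ^ m = x ^ n" by simp

lemma R0: "0 < R" using R10 by simp

lemma cc: "c * c + 2 * c \<le> 1"
proof -
  have "c + 1 < sqrt 2" using csq by simp
  moreover have "0 \<le> c + 1" using c0 by simp
  ultimately have "(c + 1) ^ 2 < (sqrt 2) ^ 2" by (intro power_strict_mono) auto
  then show ?thesis by (simp add: power2_eq_square algebra_simps)
qed

lemma bL_real: "ok l \<Longrightarrow> real (bL l) = c * real (aL l)"
proof -
  assume "ok l"
  then obtain z where z: "c * real (R ^ (K - l)) = real_of_int z" unfolding ok_def by (auto elim: Ints_cases)
  have "0 \<le> c * real (R ^ (K - l))" using c0 by simp
  then have "z \<ge> 0" using z by simp
  then show ?thesis using z by (simp add: bL_def aL_def)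
qed

lemma aL_pos: "0 < aL l" using R0 by (simp add: aL_def)

lemma Mb_split: "l \<le> K \<Longrightarrow> Mb l = R ^ (2 * l) * R * aL l"
proof -
  assume "l \<le> K"
  then have "R ^ (K + 1 + l) = R ^ (2 * l + 1 + (K - l))" by (intro powE) linarith
  also have "\<dots> = R ^ (2 * l) * R * R ^ (K - l)" by (simp only: power_add power_one_right)
  finally show ?thesis unfolding Mb_def aL_def .
qed

lemma NP: "ok l \<Longrightarrow> (R ^ (2 * l) * t) * (aL l + bL l) = Mb l"
proof -
  assume h: "ok l"
  then have lK: "l \<le> K" by (simp add: ok_def)
  have "real ((R ^ (2 * l) * t) * (aL l + bL l)) = real (R ^ (2 * l)) * real t * (1 + c) * real (aL l)"
    using bL_real[OF h] by (simp add: algebra_simps)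
  also have "\<dots> = real (R ^ (2 * l) * R * aL l)" using Rdef by (simp add: algebra_simps)
  also have "\<dots> = real (Mb l)" using Mb_split[OF lK] by simp
  finally show ?thesis by (simp only: of_nat_eq_iff)
qed

lemma floorN: "ok l \<Longrightarrow> nat \<lfloor>real (Mb l) / ((1 + c) * real (aL l))\<rfloor> = R ^ (2 * l) * t"
proof -
  assume h: "ok l"
  have "real (Mb l) = real ((R ^ (2 * l) * t) * (aL l + bL l))" by (simp only: NP[OF h])
  also have "\<dots> = real (R ^ (2 * l) * t) * (real (aL l) + real (bL l))" by simp
  also have "\<dots> = real (R ^ (2 * l) * t) * ((1 + c) * real (aL l))" using bL_real[OF h]
    by (simp add: algebra_simps)
  finally have "real (Mb l) = real (R ^ (2 * l) * t) * ((1 + c) * real (aL l))" .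
  moreover have "(1 + c) * real (aL l) > 0" using c0 aL_pos[of l] by (simp add: add_pos_nonneg)
  ultimately have "real (Mb l) / ((1 + c) * real (aL l)) = real (R ^ (2 * l) * t)"
    by (simp only: nonzero_mult_div_cancel_right less_irrefl)
  then show ?thesis by (simp only: floor_of_nat nat_int)
qed

lemma LL_split: "l \<le> K \<Longrightarrow> LL = R ^ (K - l) * Mb l"
proof -
  assume "l \<le> K"
  then have "R ^ (2 * K + 1) = R ^ ((K - l) + (K + 1 + l))" by (intro powE) linarith
  also have "\<dots> = R ^ (K - l) * R ^ (K + 1 + l)" by (simp add: power_add)
  finally show ?thesis unfolding LL_def Mb_def .
qed

lemma gword_props:
  assumes "ok l"
  shows "length (gword c R K l) = 2 * LL" "y < 2 * LL \<Longrightarrow> gword c R K l ! y = gs (aL l) (bL l) (Mb l) y"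
proof -
  have lK: "l \<le> K" using assms by (simp add: ok_def)
  define N where "N = R ^ (2 * l) * t"
  have Nm: "N * (aL l + bL l) = Mb l" using NP[OF assms] N_def by simp
  have M0: "0 < Mb l" using R0 by (simp add: Mb_def)
  have fl: "nat \<lfloor>real (Mb l) / ((1 + c) * real (aL l))\<rfloor> = N" using floorN[OF assms] N_def by simp
  have bb: "nat \<lfloor>c * real (aL l)\<rfloor> = bL l" by (simp add: bL_def aL_def)
  have o: "one_blk c (Mb l) (aL l) = concat (replicate N (replicate (aL l) 1 @ replicate (bL l) 2))"
    unfolding one_blk_def fl bb ..
  have tw: "two_blk c (Mb l) (aL l) = concat (replicate N (replicate (aL l) 2 @ replicate (bL l) 1))"
    unfolding two_blk_def fl bb ..
  have dd: "R ^ (2 * K + 1) div R ^ (K + 1 + l) = R ^ (K - l)"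
    using LL_split[OF lK] M0 by (simp add: LL_def Mb_def)
  have g: "gword c R K l = concat (replicate (R ^ (K - l)) (one_blk c (Mb l) (aL l) @ two_blk c (Mb l) (aL l)))"
    unfolding gword_def dd by (simp add: Mb_def aL_def)
  have lb: "length (one_blk c (Mb l) (aL l) @ two_blk c (Mb l) (aL l)) = 2 * Mb l"
    unfolding o tw using Nm by (simp add: len_cr)
  show "length (gword c R K l) = 2 * LL" unfolding g using lb LL_split[OF lK] by (simp add: len_cr)
  assume y: "y < 2 * LL"
  have "gword c R K l ! y = (one_blk c (Mb l) (aL l) @ two_blk c (Mb l) (aL l)) ! (y mod (2 * Mb l))"
    unfolding g using y lb LL_split[OF lK] by (subst cr_nth) (auto simp: mult.commute mult.left_commute)
  also have "\<dots> = gs (aL l) (bL l) (Mb l) (y mod (2 * Mb l))"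
    unfolding o tw by (rule two_blocks_nth[OF Nm aL_pos]) (use M0 in simp)
  also have "\<dots> = gs (aL l) (bL l) (Mb l) y"
  proof (rule gs_mod)
    have "2 * Mb l = (aL l + bL l) * (2 * N)" using Nm by (simp add: algebra_simps)
    then show "(aL l + bL l) dvd (2 * Mb l)" by (rule dvdI)
  qed (use M0 in auto)
  finally show "gword c R K l ! y = gs (aL l) (bL l) (Mb l) y" .
qed

lemma hat_props:
  assumes "\<forall>l\<in>set w. ok l"
  shows "length (hat c R K w) = 2 * LL * length w"
    "x < 2 * LL * length w \<Longrightarrow> hat c R K w ! x = gs (aL (w ! (x div (2 * LL)))) (bL (w ! (x div (2 * LL)))) (Mb (w ! (x div (2 * LL)))) x"
proof -
  have len: "\<forall>l\<in>set w. length (gword c R K l) = 2 * LL" using assms gword_props(1) by blast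
  show "length (hat c R K w) = 2 * LL * length w" unfolding hat_def by (rule len_concat_map[OF len])
  assume x: "x < 2 * LL * length w"
  define l where "l = w ! (x div (2 * LL))"
  have LL0: "0 < LL" using R0 by (simp add: LL_def)
  have "x div (2 * LL) < length w" using x LL0 by (simp add: div_less_iff_less_mult mult.commute)
  then have okl: "ok l" using assms l_def by simp
  have "hat c R K w ! x = gword c R K l ! (x mod (2 * LL))"
    unfolding hat_def l_def by (rule concat_map_nth[OF len x])
  also have "\<dots> = gs (aL l) (bL l) (Mb l) (x mod (2 * LL))"
    using gword_props(2)[OF okl] LL0 by simp
  also have "\<dots> = gs (aL l) (bL l) (Mb l) x"
  proof (rule gs_mod)
    have lK: "l \<le> K" using okl by (simp add: ok_def)
    have Nm: "(R ^ (2 * l) * t) * (aL l + bL l) = Mb l" by (rule NP[OF okl])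
    show "(2 * Mb l) dvd (2 * LL)" using LL_split[OF lK] by simp
    have "2 * LL = (aL l + bL l) * (2 * R ^ (K - l) * (R ^ (2 * l) * t))" using LL_split[OF lK] Nm[symmetric]
      by (simp add: algebra_simps)
    then show "(aL l + bL l) dvd (2 * LL)" by (rule dvdI)
    show "0 < Mb l" using R0 by (simp add: Mb_def)
  qed
  finally show "hat c R K w ! x = gs (aL (w ! (x div (2 * LL)))) (bL (w ! (x div (2 * LL)))) (Mb (w ! (x div (2 * LL)))) x"
    using l_def by simp
qed

lemma pow_le: "i \<le> j \<Longrightarrow> R ^ i \<le> R ^ j" using R0 by (simp add: power_increasing)

lemma tl_inst:
  assumes "ok lm" "ok mu" "lm < mu"
  shows "twolev (aL lm) (bL lm) (Mb lm) (aL mu) (bL mu) (Mb mu) c R"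
proof
  have lK: "lm \<le> K" "mu \<le> K" "1 \<le> lm" "1 \<le> mu" using assms by (auto simp: ok_def)
  show "0 < aL mu" by (rule aL_pos)
  show "real (bL lm) = c * real (aL lm)" by (rule bL_real[OF assms(1)])
  show "real (bL mu) = c * real (aL mu)" by (rule bL_real[OF assms(2)])
  show "0 \<le> c" by (rule c0)
  show "c * c + 2 * c \<le> 1" by (rule cc)
  have "Mb lm = (aL lm + bL lm) * (R ^ (2 * lm) * t)" using NP[OF assms(1)] by (simp add: mult.commute)
  then show "(aL lm + bL lm) dvd Mb lm" by (rule dvdI)
  show "0 < Mb lm" using R0 by (simp add: Mb_def)
  show "R * aL mu \<le> aL lm"
  proof -
    have "R * aL mu = R ^ (Suc (K - mu))" by (simp add: aL_def)
    also have "\<dots> \<le> R ^ (K - lm)" using lK assms(3) by (intro pow_le) linarith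
    finally show ?thesis by (simp add: aL_def)
  qed
  show "R * Mb lm \<le> Mb mu"
  proof -
    have "R * Mb lm = R ^ (Suc (K + 1 + lm))" by (simp add: Mb_def)
    also have "\<dots> \<le> R ^ (K + 1 + mu)" using assms(3) by (intro pow_le) linarith
    finally show ?thesis by (simp add: Mb_def)
  qed
  show "4 * R * aL mu \<le> Mb mu"
  proof -
    have "4 * R * aL mu = 4 * R ^ (Suc (K - mu))" by (simp add: aL_def)
    also have "\<dots> \<le> R ^ (2 * mu) * R ^ (Suc (K - mu))"
    proof -
      have "4 \<le> R" using R10 by simp
      also have "R = R ^ 1" by simp
      also have "\<dots> \<le> R ^ (2 * mu)" using lK by (intro pow_le) linarith
      finally show ?thesis by simp
    qed
    also have "\<dots> = R ^ (2 * mu + Suc (K - mu))" by (simp only: power_add)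
    also have "\<dots> = R ^ (K + 1 + mu)" using lK by (intro powE) linarith
    finally show ?thesis by (simp add: Mb_def)
  qed
  show "0 < R" by (rule R0)
qed

lemma err_bound:
  assumes "ok lm" "ok mu" "lm < mu"
  shows "2 * real (Mb lm) + 8 * real (aL mu) \<le> 3 * real LL / real R"
proof -
  have lK: "lm \<le> K" "mu \<le> K" "1 \<le> lm" "1 \<le> mu" using assms by (auto simp: ok_def)
  have "Mb lm \<le> R ^ (2 * K)" unfolding Mb_def using assms(3) lK by (intro pow_le) linarith
  moreover have "8 * aL mu \<le> R ^ (2 * K)"
  proof -
    have "8 \<le> R" using R10 by simp
    also have "R = R ^ 1" by simp
    also have "\<dots> \<le> R ^ (K + mu)" using lK by (intro pow_le) linarith
    finally have "8 * aL mu \<le> R ^ (K + mu) * R ^ (K - mu)" by (simp add: aL_def)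
    also have "\<dots> = R ^ (K + mu + (K - mu))" by (simp only: power_add)
    also have "\<dots> = R ^ (2 * K)" using lK by (intro powE) linarith
    finally show ?thesis .
  qed
  ultimately have "2 * Mb lm + 8 * aL mu \<le> 3 * R ^ (2 * K)" by simp
  then have "real (2 * Mb lm + 8 * aL mu) \<le> real (3 * R ^ (2 * K))" by (simp only: of_nat_le_iff)
  then have "2 * real (Mb lm) + 8 * real (aL mu) \<le> 3 * real R ^ (2 * K)" by simp
  moreover have "3 * real LL / real R = 3 * real R ^ (2 * K)" using R0 by (simp add: LL_def)
  ultimately show ?thesis by simp
qed

end

lemma lcs_fin: "finite {length v | v. subseq v u1 \<and> subseq v u2}"
proof -
  have "{length v | v. subseq v u1 \<and> subseq v u2} \<subseteq> {..length u1}"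
  proof
    fix n assume "n \<in> {length v | v. subseq v u1 \<and> subseq v u2}"
    then obtain v where "n = length v" "subseq v u1" by blast
    then show "n \<in> {..length u1}" using list_emb_length[of _ v u1] by simp
  qed
  then show ?thesis by (rule finite_subset) simp
qed

lemma lcs_ge: "subseq v u1 \<Longrightarrow> subseq v u2 \<Longrightarrow> length v \<le> LCS u1 u2"
  unfolding LCS_def by (rule Max_ge[OF lcs_fin]) blast

lemma lcs_ex: "\<exists>v. subseq v u1 \<and> subseq v u2 \<and> length v = LCS u1 u2"
proof -
  have "(0::nat) \<in> {length v | v. subseq v u1 \<and> subseq v u2}"
    unfolding mem_Collect_eq by (rule exI[of _ "[]"]) simp
  then have "{length v | v. subseq v u1 \<and> subseq v u2} \<noteq> {}" by auto
  then have "LCS u1 u2 \<in> {length v | v. subseq v u1 \<and> subseq v u2}"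
    unfolding LCS_def by (rule Max_in[OF lcs_fin])
  then obtain v where "LCS u1 u2 = length v" "subseq v u1" "subseq v u2"
    unfolding mem_Collect_eq by (elim exE conjE)
  then show ?thesis by (intro exI[of _ v]) simp
qed

lemma subseq_drop_cons:
  assumes "i0 \<le> i1" "i1 < length w" "subseq v (drop (Suc i1) w)"
  shows "subseq (w ! i1 # v) (drop i0 w)"
proof -
  have e1: "drop i0 w = take (i1 - i0) (drop i0 w) @ drop (i1 - i0) (drop i0 w)" by (rule append_take_drop_id[symmetric])
  have e2: "drop (i1 - i0) (drop i0 w) = drop i1 w" using assms(1) by simp
  have e3: "drop i1 w = w ! i1 # drop (Suc i1) w" using assms(2) by (rule Cons_nth_drop_Suc[symmetric])
  have eq: "drop i0 w = take (i1 - i0) (drop i0 w) @ (w ! i1 # drop (Suc i1) w)"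
    using e1 e2 e3 by simp
  have "subseq (w ! i1 # v) (w ! i1 # drop (Suc i1) w)" using assms(3) by simp
  then have "subseq (w ! i1 # v) (take (i1 - i0) (drop i0 w) @ (w ! i1 # drop (Suc i1) w))"
    by (rule list_emb_append2)
  then show ?thesis by (subst eq)
qed

lemma lcs_step:
  assumes "i0 \<le> i1" "i1 < length w1" "j0 \<le> j1" "j1 < length w2" "w1 ! i1 = w2 ! j1"
  shows "Suc (LCS (drop (Suc i1) w1) (drop (Suc j1) w2)) \<le> LCS (drop i0 w1) (drop j0 w2)"
proof -
  obtain v where v: "subseq v (drop (Suc i1) w1)" "subseq v (drop (Suc j1) w2)"
      "length v = LCS (drop (Suc i1) w1) (drop (Suc j1) w2)" using lcs_ex by blast
  have "subseq (w1 ! i1 # v) (drop i0 w1)" by (rule subseq_drop_cons[OF assms(1,2) v(1)])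
  moreover have "subseq (w1 ! i1 # v) (drop j0 w2)" unfolding assms(5)
    by (rule subseq_drop_cons[OF assms(3,4) v(2)])
  ultimately have "length (w1 ! i1 # v) \<le> LCS (drop i0 w1) (drop j0 w2)" by (rule lcs_ge)
  then show ?thesis using v(3) by simp
qed

lemma card_block:
  assumes "inj_on f A" "\<forall>x\<in>A. f x div N = i" "0 < N"
  shows "card A \<le> N"
proof -
  have "f ` A \<subseteq> {i * N..<i * N + N}"
  proof
    fix y assume "y \<in> f ` A"
    then have h: "y div N = i" using assms(2) by auto
    have "y = i * N + y mod N" using div_mult_mod_eq[of y N] h by simp
    moreover have "y mod N < N" using assms(3) by simp
    ultimately show "y \<in> {i * N..<i * N + N}" by simp
  qed
  then have "card (f ` A) \<le> N" using card_mono[of "{i * N..<i * N + N}" "f ` A"] by simp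
  then show ?thesis using card_image[OF assms(1)] by simp
qed

lemma same_count:
  fixes N :: nat and w1 w2 :: "nat list" and ps :: "(nat \<times> nat) list"
  assumes "srt ps" "0 < N" "\<forall>x\<in>set ps. fst x < N * length w1 \<and> snd x < N * length w2"
  shows "card {x \<in> set ps. w1 ! (fst x div N) = w2 ! (snd x div N) \<and> i0 \<le> fst x div N \<and> j0 \<le> snd x div N}
     \<le> 2 * N * LCS (drop i0 w1) (drop j0 w2)"
proof (induction "length w1 - i0" arbitrary: i0 j0 rule: less_induct)
  case less
  define P where "P = (\<lambda>x. w1 ! (fst x div N) = w2 ! (snd x div N) \<and> i0 \<le> fst x div N \<and> j0 \<le> snd x div N)"
  define Z where "Z = {x \<in> set ps. P x}"
  show ?case
  proof (cases "Z = {}")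
    case True then have "card Z = 0" by simp
    then have "card Z \<le> 2 * N * LCS (drop i0 w1) (drop j0 w2)" by simp
    then show ?thesis by (simp only: Z_def P_def)
  next
    case False
    define F where "F = filter P ps"
    have Fne: "F \<noteq> []" using False unfolding Z_def F_def by (auto simp: filter_empty_conv)
    have sF: "srt F" using assms(1) unfolding F_def srt_def by (rule sorted_wrt_filter)
    define x1 where "x1 = hd F"
    have x1F: "x1 \<in> set F" using Fne x1_def by simp
    then have x1ps: "x1 \<in> set ps" and Px1: "P x1" unfolding F_def by auto
    define i1 where "i1 = fst x1 div N"
    define j1 where "j1 = snd x1 div N"
    have i1b: "i1 < length w1" using assms(3) x1ps i1_def assms(2)
      by (simp add: div_less_iff_less_mult mult.commute)
    have j1b: "j1 < length w2" using assms(3) x1ps j1_def assms(2)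
      by (simp add: div_less_iff_less_mult mult.commute)
    have ij: "i0 \<le> i1" "j0 \<le> j1" "w1 ! i1 = w2 ! j1" using Px1 P_def i1_def j1_def by auto
    have minx: "\<And>x. x \<in> Z \<Longrightarrow> i1 \<le> fst x div N \<and> j1 \<le> snd x div N"
    proof -
      fix x assume "x \<in> Z"
      then have "x \<in> set F" unfolding Z_def F_def by simp
      then have "fst x1 \<le> fst x" "snd x1 \<le> snd x" using srt_hd_le[OF sF] x1_def by auto
      then show "i1 \<le> fst x div N \<and> j1 \<le> snd x div N" unfolding i1_def j1_def by (simp add: div_le_mono)
    qed
    define ZA where "ZA = {x \<in> set ps. fst x div N = i1}"
    define ZB where "ZB = {x \<in> set ps. snd x div N = j1}"
    define Z' where "Z' = {x \<in> set ps. w1 ! (fst x div N) = w2 ! (snd x div N) \<and> Suc i1 \<le> fst x div N \<and> Suc j1 \<le> snd x div N}"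
    have Zsub: "Z \<subseteq> ZA \<union> ZB \<union> Z'"
    proof
      fix x assume xZ: "x \<in> Z"
      then have "i1 \<le> fst x div N" "j1 \<le> snd x div N" using minx by auto
      moreover have "x \<in> set ps" "w1 ! (fst x div N) = w2 ! (snd x div N)" using xZ Z_def P_def by auto
      ultimately show "x \<in> ZA \<union> ZB \<union> Z'" unfolding ZA_def ZB_def Z'_def by auto
    qed
    have injf: "inj_on fst (set ps)" "inj_on snd (set ps)"
      using srt_distinct[OF assms(1)] by (simp_all add: distinct_map)
    have cA: "card ZA \<le> N"
      by (rule card_block[of fst _ N i1]) (use injf assms(2) in \<open>auto simp: ZA_def intro: inj_on_subset\<close>)
    have cB: "card ZB \<le> N"
      by (rule card_block[of snd _ N j1]) (use injf assms(2) in \<open>auto simp: ZB_def intro: inj_on_subset\<close>)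
    have lt: "length w1 - Suc i1 < length w1 - i0" using i1b ij(1) by simp
    have cZ': "card Z' \<le> 2 * N * LCS (drop (Suc i1) w1) (drop (Suc j1) w2)"
      using less.hyps[OF lt, of "Suc j1"] unfolding Z'_def by simp
    have fin: "finite (ZA \<union> ZB \<union> Z')" unfolding ZA_def ZB_def Z'_def by auto
    have "card Z \<le> card (ZA \<union> ZB \<union> Z')" by (rule card_mono[OF fin Zsub])
    also have "\<dots> \<le> card ZA + card ZB + card Z'"
      using card_Un_le[of "ZA \<union> ZB" Z'] card_Un_le[of ZA ZB] by simp
    also have "\<dots> \<le> 2 * N * (Suc (LCS (drop (Suc i1) w1) (drop (Suc j1) w2)))" using cA cB cZ' by simp
    also have "\<dots> \<le> 2 * N * LCS (drop i0 w1) (drop j0 w2)"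
      using mult_le_mono2[OF lcs_step[OF ij(1) i1b ij(2) j1b ij(3)], of "2 * N"] by simp
    finally show ?thesis unfolding Z_def P_def .
  qed
qed

lemma final_arith:
  fixes s nS nF D Lr Lam c iR :: real
  assumes iR: "0 < iR" "iR \<le> 1 / 10" and c: "0 \<le> c" "c \<le> 1 / 2"
    and nn: "0 \<le> s" "0 \<le> nS" "0 \<le> nF" "0 \<le> Lr" "0 \<le> D" "0 \<le> Lam"
    and A: "(1 + 4 * iR) * s \<ge> 2 * nS + (3 + c) * nF - 3 * Lr * iR * (D + 1)"
    and B: "s \<ge> 2 * Lr * D - 4 * Lr"
    and C: "nS \<le> 4 * Lr * Lam"
  shows "s \<ge> (3 + c - 28 * iR) * (nS + nF) - 16 * Lr * Lam - 40 * Lr * iR"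
proof (rule ccontr)
  define T where "T = (3 + c - 28 * iR) * (nS + nF) - 16 * Lr * Lam - 40 * Lr * iR"
  assume "\<not> ?thesis"
  then have sT: "s < T" unfolding T_def by simp
  have A': "s + 4 * (iR * s) \<ge> 2 * nS + 3 * nF + c * nF - 3 * (iR * (Lr * D)) - 3 * (iR * Lr)"
    using A by (simp add: algebra_simps)
  have "iR * s \<ge> iR * (2 * Lr * D - 4 * Lr)" using B iR by (intro mult_left_mono) auto
  then have B': "iR * s \<ge> 2 * (iR * (Lr * D)) - 4 * (iR * Lr)" by (simp add: algebra_simps)
  have cS: "c * nS \<le> nS / 2" using mult_right_mono[OF c(2) nn(2)] by simp
  have cF: "c * nF \<le> nF / 2" using mult_right_mono[OF c(2) nn(3)] by simp
  have Tle: "T \<le> 3 * nS + 3 * nF + c * nS + c * nF"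
  proof -
    have "0 \<le> 28 * iR * (nS + nF)" using iR nn by simp
    moreover have "0 \<le> Lr * Lam" "0 \<le> Lr * iR" using nn iR by simp_all
    ultimately show ?thesis unfolding T_def by (simp add: algebra_simps)
  qed
  have "iR * s \<le> iR * T" using sT iR by (intro mult_left_mono) auto
  also have "\<dots> \<le> iR * (3 * nS + 3 * nF + c * nS + c * nF)" using Tle iR by (intro mult_left_mono) auto
  also have "\<dots> \<le> iR * (7 / 2 * (nS + nF))" using cS cF iR by (intro mult_left_mono) auto
  finally have iRs: "iR * s \<le> 7 / 2 * (iR * nS) + 7 / 2 * (iR * nF)" by (simp add: algebra_simps)
  have T': "T = 3 * nS + 3 * nF + c * nS + c * nF - 28 * (iR * nS) - 28 * (iR * nF) - 16 * (Lr * Lam) - 40 * (iR * Lr)"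
    unfolding T_def by (simp add: algebra_simps)
  have pos: "0 \<le> iR * nS" "0 \<le> iR * nF" "0 \<le> iR * Lr" "0 \<le> Lr * Lam" using iR nn by simp_all
  show False using sT A' B' cS C iRs T' pos by linarith
qed

lemma srt_swap: "srt cs \<Longrightarrow> srt (map prod.swap cs)"
  unfolding srt_def by (simp add: sorted_wrt_map) (rule sorted_wrt_mono_rel[rotated], assumption, simp)

lemma spn_swap: "spn (map prod.swap cs) = spn cs"
  by (cases "cs = []") (simp_all add: spn_def hul_def last_map hd_map)

context conc begin

definition WW :: "nat list \<Rightarrow> nat list \<Rightarrow> nat \<times> nat \<Rightarrow> real" where
  "WW w1 w2 x = (if w1 ! (fst x div (2 * LL)) = w2 ! (snd x div (2 * LL)) then 2 else 3 + c)"

definition good :: "nat list \<Rightarrow> nat list \<Rightarrow> nat \<times> nat \<Rightarrow> bool" where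
  "good w1 w2 x \<longleftrightarrow> fst x < 2 * LL * length w1 \<and> snd x < 2 * LL * length w2
      \<and> hat c R K w1 ! fst x = hat c R K w2 ! snd x"

lemma LL0: "0 < LL" using R0 by (simp add: LL_def)

lemma piece_glob:
  assumes Aw1: "\<forall>l\<in>set w1. ok l" and Aw2: "\<forall>l\<in>set w2. ok l"
    and cs: "srt cs" "cs \<noteq> []" "\<forall>x\<in>set cs. good w1 w2 x"
    and ij: "\<forall>x\<in>set cs. fst x div (2 * LL) = i0 \<and> snd x div (2 * LL) = j0"
  shows "(1 + 4 / real R) * spn cs \<ge> sum_list (map (WW w1 w2) cs) - 3 * real LL / real R"
proof -
  define N where "N = 2 * LL"
  have N0: "0 < N" using LL0 N_def by simp
  obtain x0 where x0: "x0 \<in> set cs" using cs(2) by (cases cs) auto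
  have gx0: "good w1 w2 x0" using cs(3) x0 by simp
  have i0b: "i0 < length w1" using gx0 ij x0 N0 unfolding good_def N_def
    by (auto simp: div_less_iff_less_mult mult.commute)
  have j0b: "j0 < length w2" using gx0 ij x0 N0 unfolding good_def N_def
    by (auto simp: div_less_iff_less_mult mult.commute)
  define lm where "lm = w1 ! i0"
  define mu where "mu = w2 ! j0"
  have oklm: "ok lm" using Aw1 i0b lm_def by simp
  have okmu: "ok mu" using Aw2 j0b mu_def by simp
  have sym: "\<forall>x\<in>set cs. gs (aL lm) (bL lm) (Mb lm) (fst x) = gs (aL mu) (bL mu) (Mb mu) (snd x)"
  proof
    fix x assume xc: "x \<in> set cs"
    have g: "good w1 w2 x" using cs(3) xc by simp
    have "hat c R K w1 ! fst x = gs (aL lm) (bL lm) (Mb lm) (fst x)"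
      using hat_props(2)[OF Aw1, of "fst x"] g ij xc lm_def unfolding good_def by simp
    moreover have "hat c R K w2 ! snd x = gs (aL mu) (bL mu) (Mb mu) (snd x)"
      using hat_props(2)[OF Aw2, of "snd x"] g ij xc mu_def unfolding good_def by simp
    ultimately show "gs (aL lm) (bL lm) (Mb lm) (fst x) = gs (aL mu) (bL mu) (Mb mu) (snd x)"
      using g unfolding good_def by simp
  qed
  have Wx: "\<forall>x\<in>set cs. WW w1 w2 x = (if lm = mu then 2 else 3 + c)"
    using ij lm_def mu_def by (simp add: WW_def)
  have sumW: "sum_list (map (WW w1 w2) cs) = (if lm = mu then 2 else 3 + c) * real (length cs)"
    by (rule sum_list_const[OF Wx])
  have E0: "0 \<le> 3 * real LL / real R" by simp
  consider (eq) "lm = mu" | (lt) "lm < mu" | (gt) "mu < lm" by linarith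
  then show ?thesis
  proof cases
    case eq
    have "spn cs \<ge> 2 * real (length cs)" by (rule spn_ge_len[OF cs(1)])
    moreover have "spn cs \<le> (1 + 4 / real R) * spn cs"
    proof -
      have "0 \<le> spn cs" using spn_ge_len[OF cs(1)] by simp
      then show ?thesis by (simp add: algebra_simps)
    qed
    moreover have "sum_list (map (WW w1 w2) cs) = 2 * real (length cs)" using sumW eq by simp
    ultimately show ?thesis using E0 by linarith
  next
    case lt
    interpret T: twolev "aL lm" "bL lm" "Mb lm" "aL mu" "bL mu" "Mb mu" c R by (rule tl_inst[OF oklm okmu lt])
    have "(1 + 4 / real R) * spn cs \<ge> (3 + c) * real (length cs) - (2 * real (Mb lm) + 8 * real (aL mu))"
      by (rule T.piece[OF cs(1,2) sym])
    then show ?thesis using sumW lt err_bound[OF oklm okmu lt] by simp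
  next
    case gt
    interpret T: twolev "aL mu" "bL mu" "Mb mu" "aL lm" "bL lm" "Mb lm" c R by (rule tl_inst[OF okmu oklm gt])
    have sym': "\<forall>x\<in>set (map prod.swap cs). gs (aL mu) (bL mu) (Mb mu) (fst x) = gs (aL lm) (bL lm) (Mb lm) (snd x)"
      using sym by auto
    have "(1 + 4 / real R) * spn (map prod.swap cs) \<ge> (3 + c) * real (length (map prod.swap cs)) - (2 * real (Mb mu) + 8 * real (aL lm))"
      by (rule T.piece[OF srt_swap[OF cs(1)] _ sym']) (use cs(2) in simp)
    then show ?thesis using sumW gt err_bound[OF okmu oklm gt] spn_swap[of cs] by simp
  qed
qed

lemma global:
  assumes Aw1: "\<forall>l\<in>set w1. ok l" and Aw2: "\<forall>l\<in>set w2. ok l"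
    and ps: "srt ps" "ps \<noteq> []" "\<forall>x\<in>set ps. good w1 w2 x"
  shows "(1 + 4 / real R) * spn ps \<ge> sum_list (map (WW w1 w2) ps)
     - 3 * real LL / real R * (real (fst (last ps) div (2 * LL) + snd (last ps) div (2 * LL))
          - real (fst (hd ps) div (2 * LL) + snd (hd ps) div (2 * LL)) + 1)"
proof (rule chunk[where Q = "\<lambda>cs. srt cs \<and> (\<forall>x\<in>set cs. good w1 w2 x)"
      and S = "\<lambda>cs. (1 + 4 / real R) * spn cs" and key = "\<lambda>x. fst x div (2 * LL) + snd x div (2 * LL)"
      and w = "WW w1 w2" and \<beta> = "3 * real LL / real R" and ps = ps])
  fix xs ys assume "srt (xs @ ys) \<and> (\<forall>x\<in>set (xs @ ys). good w1 w2 x)"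
  then show "(srt xs \<and> (\<forall>x\<in>set xs. good w1 w2 x)) \<and> (srt ys \<and> (\<forall>x\<in>set ys. good w1 w2 x))"
    using srt_append[of xs ys] by simp
next
  fix xs ys assume h: "srt (xs @ ys) \<and> (\<forall>x\<in>set (xs @ ys). good w1 w2 x)" "xs \<noteq> []" "ys \<noteq> []"
  then have "spn (xs @ ys) \<ge> spn xs + spn ys" using spn_super[of xs ys] by simp
  then have "(1 + 4 / real R) * (spn xs + spn ys) \<le> (1 + 4 / real R) * spn (xs @ ys)"
    by (rule mult_left_mono) simp
  then show "(1 + 4 / real R) * spn (xs @ ys) \<ge> (1 + 4 / real R) * spn xs + (1 + 4 / real R) * spn ys"
    by (simp add: distrib_left)
next
  show "srt ps \<and> (\<forall>x\<in>set ps. good w1 w2 x)" using ps by simp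
  show "ps \<noteq> []" by fact
  have "sorted_wrt (\<lambda>x y. fst x div (2 * LL) + snd x div (2 * LL) \<le> fst y div (2 * LL) + snd y div (2 * LL)) ps"
    using ps(1) unfolding srt_def by (rule sorted_wrt_mono_rel[rotated]) (simp add: add_mono div_le_mono)
  then show "sorted (map (\<lambda>x. fst x div (2 * LL) + snd x div (2 * LL)) ps)" by (simp add: sorted_wrt_map)
  show "0 \<le> 3 * real LL / real R" by simp
next
  fix cs assume Qc: "srt cs \<and> (\<forall>x\<in>set cs. good w1 w2 x)" and cne: "cs \<noteq> []"
    and kc: "\<forall>x\<in>set cs. fst x div (2 * LL) + snd x div (2 * LL) = fst (hd cs) div (2 * LL) + snd (hd cs) div (2 * LL)"
  have ij: "\<forall>x\<in>set cs. fst x div (2 * LL) = fst (hd cs) div (2 * LL) \<and> snd x div (2 * LL) = snd (hd cs) div (2 * LL)"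
  proof
    fix x assume xc: "x \<in> set cs"
    have "fst (hd cs) \<le> fst x" "snd (hd cs) \<le> snd x" using srt_hd_le[of cs x] Qc xc by auto
    then have "fst (hd cs) div (2 * LL) \<le> fst x div (2 * LL)" "snd (hd cs) div (2 * LL) \<le> snd x div (2 * LL)"
      by (simp_all add: div_le_mono)
    then show "fst x div (2 * LL) = fst (hd cs) div (2 * LL) \<and> snd x div (2 * LL) = snd (hd cs) div (2 * LL)"
      using kc xc by auto
  qed
  show "(1 + 4 / real R) * spn cs \<ge> sum_list (map (WW w1 w2) cs) - 3 * real LL / real R"
    by (rule piece_glob[OF Aw1 Aw2 _ cne _ ij]) (use Qc in auto)
qed

end

context conc begin

lemma main_ps:
  assumes Aw1: "\<forall>l\<in>set w1. ok l" and Aw2: "\<forall>l\<in>set w2. ok l"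
    and ps: "srt ps" "ps \<noteq> []" "\<forall>x\<in>set ps. good w1 w2 x"
  shows "spn ps \<ge> (3 + c - 28 / real R) * real (length ps) - 16 * real LL * real (LCS w1 w2)
     - 40 * real LL / real R"
proof -
  define N where "N = 2 * LL"
  have N0: "0 < N" using LL0 N_def by simp
  define sm where "sm = (\<lambda>x::nat\<times>nat. w1 ! (fst x div N) = w2 ! (snd x div N))"
  define nS where "nS = length (filter sm ps)"
  define nF where "nF = length (filter (\<lambda>x. \<not> sm x) ps)"
  have nSF: "nS + nF = length ps" using sum_length_filter_compl[of sm ps] nS_def nF_def by simp
  have WWe: "WW w1 w2 = (\<lambda>x. if sm x then 2 else 3 + c)" by (rule ext) (simp add: WW_def sm_def N_def)
  have sumW: "sum_list (map (WW w1 w2) ps) = 2 * real nS + (3 + c) * real nF"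
    unfolding WWe nS_def nF_def by (rule sum_if_list)
  define pf where "pf = fst (hd ps)"
  define pl where "pl = fst (last ps)"
  define qf where "qf = snd (hd ps)"
  define ql where "ql = snd (last ps)"
  define D where "D = real (pl div N + ql div N) - real (pf div N + qf div N)"
  have A: "(1 + 4 / real R) * spn ps \<ge> 2 * real nS + (3 + c) * real nF - 3 * real LL / real R * (D + 1)"
    using global[OF Aw1 Aw2 ps] sumW unfolding D_def pf_def pl_def qf_def ql_def N_def by simp
  have pfl: "pf \<le> pl" "qf \<le> ql" using srt_hd_le[OF ps(1), of "last ps"] ps(2) pf_def pl_def qf_def ql_def
    by auto
  have D0: "0 \<le> D" unfolding D_def using pfl by (simp add: div_le_mono add_mono)
  have B: "spn ps \<ge> 2 * real LL * D - 4 * real LL"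
  proof -
    have h1: "hul fst ps = real pl - real pf + 1" "hul snd ps = real ql - real qf + 1"
      using ps(2) pf_def pl_def qf_def ql_def by (simp_all add: hul_def)
    have b1: "real (pl div N) * real N \<le> real pl" "real pf < (real (pf div N) + 1) * real N"
      "real (ql div N) * real N \<le> real ql" "real qf < (real (qf div N) + 1) * real N"
      using div_real_bounds[OF N0] by auto
    have "2 * real LL * D - 4 * real LL = real N * (real (pl div N) + real (ql div N)) - real N * (real (pf div N) + 1) - real N * (real (qf div N) + 1)"
      unfolding D_def N_def by (simp add: algebra_simps)
    also have "\<dots> \<le> real pl - real pf + (real ql - real qf)" using b1 by (simp add: algebra_simps)
    also have "\<dots> \<le> spn ps" using h1 by (simp add: spn_def)
    finally show ?thesis .
  qed
  have C: "real nS \<le> 4 * real LL * real (LCS w1 w2)"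
  proof -
    have dps: "distinct ps" using srt_distinct(1)[OF ps(1)] by (simp add: distinct_map)
    have "nS = card {x \<in> set ps. sm x}" unfolding nS_def
      using distinct_card[OF distinct_filter[OF dps, of sm]] by simp
    also have "\<dots> = card {x \<in> set ps. w1 ! (fst x div N) = w2 ! (snd x div N) \<and> 0 \<le> fst x div N \<and> 0 \<le> snd x div N}"
      unfolding sm_def by simp
    also have "\<dots> \<le> 2 * N * LCS (drop 0 w1) (drop 0 w2)"
    proof (rule same_count[OF ps(1) N0])
      show "\<forall>x\<in>set ps. fst x < N * length w1 \<and> snd x < N * length w2"
        using ps(3) unfolding good_def N_def by simp
    qed
    finally have "nS \<le> 4 * LL * LCS w1 w2" unfolding N_def by simp
    then have "real nS \<le> real (4 * LL * LCS w1 w2)" by (simp only: of_nat_le_iff)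
    then show ?thesis by simp
  qed
  have c2: "c \<le> 1 / 2"
  proof -
    have "0 \<le> c * c" by simp
    then show ?thesis using cc by linarith
  qed
  have R10': "1 / real R \<le> 1 / 10" using R10 by (simp add: frac_le)
  have sp0: "0 \<le> spn ps" using spn_ge_len[OF ps(1)] by simp
  have "spn ps \<ge> (3 + c - 28 * (1 / real R)) * (real nS + real nF) - 16 * real LL * real (LCS w1 w2)
     - 40 * real LL * (1 / real R)"
  proof (rule final_arith[where D = D])
    show "0 < 1 / real R" using R0 by simp
    show "1 / real R \<le> 1 / 10" by (rule R10')
    show "0 \<le> c" by (rule c0)
    show "c \<le> 1 / 2" by (rule c2)
    show "(1 + 4 * (1 / real R)) * spn ps \<ge> 2 * real nS + (3 + c) * real nF - 3 * real LL * (1 / real R) * (D + 1)"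
      using A by simp
  qed (use sp0 D0 B C in simp_all)
  moreover have "real nS + real nF = real (length ps)" by (simp flip: nSF)
  ultimately show ?thesis by simp
qed

end

lemma nths_as_map:
  assumes "I \<subseteq> {..<length u}"
  shows "nths u I = map (nth u) (filter (\<lambda>i. i \<in> I) [0..<length u])"
proof -
  have "nths u I = nths (map (nth u) [0..<length u]) I" by (simp add: map_nth)
  also have "\<dots> = map (nth u) (nths [0..<length u] I)" by (rule nths_map)
  also have "nths [0..<length u] I = filter (\<lambda>i. i \<in> I) [0..<length u]"
  proof -
    have "{i. i < length [0..<length u] \<and> [0..<length u] ! i \<in> I} = I" using assms by auto
    then show ?thesis using filter_eq_nths[of "\<lambda>i. i \<in> I" "[0..<length u]"] by simp
  qed
  finally show ?thesis .
qed

lemma sorted_max_min: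
  assumes "sorted_wrt (<) (xs::nat list)" "xs \<noteq> []"
  shows "Max (set xs) = last xs" "Min (set xs) = hd xs"
proof -
  have le: "\<forall>y\<in>set xs. hd xs \<le> y \<and> y \<le> last xs"
  proof
    fix y assume "y \<in> set xs"
    then obtain k where k: "k < length xs" "y = xs ! k" by (auto simp: in_set_conv_nth)
    have "xs ! 0 \<le> xs ! k" using assms(1) k(1) by (cases "k = 0") (auto dest: sorted_wrt_nth_less)
    moreover have "xs ! k \<le> xs ! (length xs - 1)"
    proof (cases "k = length xs - 1")
      case True then show ?thesis by simp
    next
      case False
      then have "k < length xs - 1" using k(1) by simp
      moreover have "length xs - 1 < length xs" using k(1) by simp
      ultimately have "xs ! k < xs ! (length xs - 1)" by (rule sorted_wrt_nth_less[OF assms(1)])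
      then show ?thesis by simp
    qed
    ultimately show "hd xs \<le> y \<and> y \<le> last xs" using k assms(2) by (simp add: hd_conv_nth last_conv_nth)
  qed
  show "Max (set xs) = last xs" by (rule Max_eqI) (use le assms(2) in auto)
  show "Min (set xs) = hd xs" by (rule Min_eqI) (use le assms(2) in auto)
qed

theorem lemma3p10:
  fixes c :: real and K t R L :: nat and w1 w2 :: "nat list" and I1 I2 :: "nat set"
  assumes "0 \<le> c" and "c < sqrt 2 - 1"
    and "K \<ge> 1" and "t > 0"
    and "real R = (1 + c) * real t" and "R \<ge> 10"
    and "L = R ^ (2*K+1)"
    and "\<forall>l\<in>set w1. l \<in> {1..K} \<and> c * real (R ^ (K-l)) \<in> \<int>"
    and "\<forall>l\<in>set w2. l \<in> {1..K} \<and> c * real (R ^ (K-l)) \<in> \<int>"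
    and "common_subseq (hat c R K w1) (hat c R K w2) I1 I2"
  shows "real (span_pos I1 + span_pos I2)
           \<ge> (3 + c - 28 / real R) * real (card I1) - 16 * real L * real (LCS w1 w2)
             - 40 * real L / real R"
proof -
  interpret conc c K t R by (unfold_locales) (use assms in auto)
  have LLe: "LL = L" using assms(7) by (simp add: LL_def)
  have Aw1: "\<forall>l\<in>set w1. ok l" using assms(8) by (simp add: ok_def)
  have Aw2: "\<forall>l\<in>set w2. ok l" using assms(9) by (simp add: ok_def)
  define u1 where "u1 = hat c R K w1"
  define u2 where "u2 = hat c R K w2"
  have I1s: "I1 \<subseteq> {..<length u1}" and I2s: "I2 \<subseteq> {..<length u2}" and eqn: "nths u1 I1 = nths u2 I2"
    using assms(10) unfolding common_subseq_def u1_def u2_def by auto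
  define l1 where "l1 = filter (\<lambda>i. i \<in> I1) [0..<length u1]"
  define l2 where "l2 = filter (\<lambda>i. i \<in> I2) [0..<length u2]"
  have e: "map (nth u1) l1 = map (nth u2) l2"
    using eqn nths_as_map[OF I1s] nths_as_map[OF I2s] l1_def l2_def by simp
  have len: "length l1 = length l2" using arg_cong[OF e, of length] by simp
  have so1: "sorted_wrt (<) l1" unfolding l1_def by (rule sorted_wrt_filter) simp
  have so2: "sorted_wrt (<) l2" unfolding l2_def by (rule sorted_wrt_filter) simp
  have st1: "set l1 = I1" using I1s l1_def by auto
  have st2: "set l2 = I2" using I2s l2_def by auto
  have cI1: "card I1 = length l1" using distinct_card[of l1] st1 so1 by (simp add: strict_sorted_iff)
  have LHS0: "0 \<le> real (span_pos I1 + span_pos I2)" by simp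
  show ?thesis
  proof (cases "I1 = {}")
    case True
    have "0 \<le> 16 * real L * real (LCS w1 w2)" "0 \<le> 40 * real L / real R" by simp_all
    moreover have "(3 + c - 28 / real R) * real (card I1) = 0" using True by simp
    ultimately show ?thesis using LHS0 by linarith
  next
    case False
    define n where "n = length l1"
    have n0: "0 < n" using False st1 n_def by (cases l1) auto
    define ps where "ps = zip l1 l2"
    have lps: "length ps = n" using len ps_def n_def by simp
    have ps_nth: "\<And>k. k < n \<Longrightarrow> ps ! k = (l1 ! k, l2 ! k)" using len ps_def n_def by simp
    have srtp: "srt ps" unfolding srt_def sorted_wrt_iff_nth_less
    proof (intro allI impI)
      fix i j assume "i < j" "j < length ps"
      then show "fst (ps ! i) < fst (ps ! j) \<and> snd (ps ! i) < snd (ps ! j)"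
        using ps_nth lps sorted_wrt_nth_less[OF so1, of i j] sorted_wrt_nth_less[OF so2, of i j] len n_def
        by simp
    qed
    have psne: "ps \<noteq> []" using lps n0 by auto
    have len1: "length u1 = 2 * LL * length w1" using hat_props(1)[OF Aw1] u1_def by simp
    have len2: "length u2 = 2 * LL * length w2" using hat_props(1)[OF Aw2] u2_def by simp
    have goodp: "\<forall>x\<in>set ps. good w1 w2 x"
    proof
      fix x assume "x \<in> set ps"
      then obtain k where k: "k < n" "x = ps ! k" using lps by (auto simp: in_set_conv_nth)
      have x: "x = (l1 ! k, l2 ! k)" using k ps_nth by simp
      have "l1 ! k \<in> I1" using st1 k(1) n_def by auto
      then have b1: "l1 ! k < 2 * LL * length w1" using I1s len1 by auto
      have "l2 ! k \<in> I2" using st2 k(1) n_def len by auto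
      then have b2: "l2 ! k < 2 * LL * length w2" using I2s len2 by auto
      have "u1 ! (l1 ! k) = u2 ! (l2 ! k)"
        using arg_cong[OF e, of "\<lambda>xs. xs ! k"] k(1) n_def len by simp
      then show "good w1 w2 x" unfolding good_def x using b1 b2 u1_def u2_def by simp
    qed
    have bound: "spn ps \<ge> (3 + c - 28 / real R) * real (length ps) - 16 * real LL * real (LCS w1 w2)
       - 40 * real LL / real R" by (rule main_ps[OF Aw1 Aw2 srtp psne goodp])
    have l1ne: "l1 \<noteq> []" and l2ne: "l2 \<noteq> []" using n0 n_def len by auto
    have hdp: "hd ps = (hd l1, hd l2)" using ps_nth[of 0] n0 psne lps
      by (simp add: hd_conv_nth[OF psne] hd_conv_nth[OF l1ne] hd_conv_nth[OF l2ne])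
    have lastp: "last ps = (last l1, last l2)" using ps_nth[of "n - 1"] n0 psne lps len n_def
      by (simp add: last_conv_nth[OF psne] last_conv_nth[OF l1ne] last_conv_nth[OF l2ne])
    have I2ne: "I2 \<noteq> {}" using st2 l2ne by auto
    have sp1: "span_pos I1 = last l1 - hd l1 + 1"
      using sorted_max_min[OF so1 l1ne] False st1 by (simp add: span_pos_def)
    have sp2: "span_pos I2 = last l2 - hd l2 + 1"
      using sorted_max_min[OF so2 l2ne] I2ne st2 by (simp add: span_pos_def)
    have hl1: "hd l1 \<le> last l1" using sorted_max_min[OF so1 l1ne] st1 False
      by (metis Max_ge_iff Min_le_iff finite_set order.refl set_empty2 l1ne)
    have hl2: "hd l2 \<le> last l2" using sorted_max_min[OF so2 l2ne] st2 I2ne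
      by (metis Max_ge_iff Min_le_iff finite_set order.refl set_empty2 l2ne)
    have "spn ps = real (span_pos I1 + span_pos I2)"
      unfolding spn_def hul_def using psne hdp lastp sp1 sp2 hl1 hl2 by (simp add: of_nat_diff)
    then show ?thesis using bound lps cI1 n_def LLe by simp
  qed
qed

end
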